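(* Let $\varepsilon\in\mathbb{R}^p$ be a random vector with mean $0$ and variance $\Delta>0$, let $W\in\mathbb{R}^{p\times p}$ be symmetric positive semidefinite, and consider the conditions (W.1) $E(\varepsilon^TW\varepsilon)=O(p)$ and (W.2) $\operatorname{var}(\varepsilon^TW\varepsilon)=O(p^2)$ as $p\to\infty$. Let $\epsilon=(\epsilon_i)=\Delta^{-1/2}\varepsilon$ (so $E(\epsilon)=0$, $\operatorname{var}(\epsilon)=I_p$) and $\phi_{ij}=E(\epsilon_i^2\epsilon_j^2)$, $i,j=1,\dots,p$. Then: (i) If $\varepsilon\sim N(0,\Delta)$, then (W.1) implies (W.2). (ii) If $W=\Delta^{-1}$ and $\phi_{ij}\le\phi<\infty$ for all $i,j$ as $p\to\infty$, then (W.2) holds. (iii) If (a) the elements $\epsilon_i$ of $\epsilon$ have symmetric distributions or are independent, and (b) $\phi_{ij}\le\phi<\infty$ for all $i,j$ as $p\to\infty$, then (W.1) implies (W.2).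
   Context: All quantities are indexed by $p$, with $p\to\infty$; $\phi$ is a constant not depending on $p$. *)

theory Defs
  imports "HOL-Probability.Probability" "HOL-Library.Landau_Symbols"
begin

text \<open>p x p real matrices are represented as functions nat => nat => real, only the
  entries with indices below p being relevant; vectors in R^p as nat => _ on indices below p.\<close>

definition qform :: "nat \<Rightarrow> (nat \<Rightarrow> nat \<Rightarrow> real) \<Rightarrow> (nat \<Rightarrow> real) \<Rightarrow> real" where
  "qform p A a = (\<Sum>i<p. \<Sum>j<p. a i * A i j * a j)"

definition sym_mat :: "nat \<Rightarrow> (nat \<Rightarrow> nat \<Rightarrow> real) \<Rightarrow> bool" where
  "sym_mat p A \<longleftrightarrow> (\<forall>i<p. \<forall>j<p. A i j = A j i)"

definition psd_mat :: "nat \<Rightarrow> (nat \<Rightarrow> nat \<Rightarrow> real) \<Rightarrow> bool" where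
  "psd_mat p A \<longleftrightarrow> sym_mat p A \<and> (\<forall>a. qform p A a \<ge> 0)"

definition pd_mat :: "nat \<Rightarrow> (nat \<Rightarrow> nat \<Rightarrow> real) \<Rightarrow> bool" where
  "pd_mat p A \<longleftrightarrow> sym_mat p A \<and> (\<forall>a. (\<exists>i<p. a i \<noteq> 0) \<longrightarrow> qform p A a > 0)"

definition mat_mult :: "nat \<Rightarrow> (nat \<Rightarrow> nat \<Rightarrow> real) \<Rightarrow> (nat \<Rightarrow> nat \<Rightarrow> real) \<Rightarrow> (nat \<Rightarrow> nat \<Rightarrow> real)" where
  "mat_mult p A B = (\<lambda>i j. \<Sum>k<p. A i k * B k j)"

definition is_id_mat :: "nat \<Rightarrow> (nat \<Rightarrow> nat \<Rightarrow> real) \<Rightarrow> bool" where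
  "is_id_mat p A \<longleftrightarrow> (\<forall>i<p. \<forall>j<p. A i j = (if i = j then 1 else 0))"

text \<open>B is the inverse of A (for square matrices a one-sided inverse is two-sided).\<close>
definition is_inverse_mat :: "nat \<Rightarrow> (nat \<Rightarrow> nat \<Rightarrow> real) \<Rightarrow> (nat \<Rightarrow> nat \<Rightarrow> real) \<Rightarrow> bool" where
  "is_inverse_mat p B A \<longleftrightarrow> is_id_mat p (mat_mult p B A)"

text \<open>S = D^(-1/2), the symmetric positive definite inverse square root of a positive
  definite D: the unique symmetric positive definite S with S D S = I.\<close>
definition is_inv_sqrt :: "nat \<Rightarrow> (nat \<Rightarrow> nat \<Rightarrow> real) \<Rightarrow> (nat \<Rightarrow> nat \<Rightarrow> real) \<Rightarrow> bool" where
  "is_inv_sqrt p D S \<longleftrightarrow> pd_mat p S \<and> is_id_mat p (mat_mult p (mat_mult p S D) S)"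

text \<open>X = (X_0,...,X_{p-1}) is jointly Gaussian with mean 0 and covariance D:
  every linear combination a^T X is N(0, a^T D a) (degenerate at 0 if a^T D a = 0).\<close>
definition mvnormal :: "'a measure \<Rightarrow> nat \<Rightarrow> (nat \<Rightarrow> 'a \<Rightarrow> real) \<Rightarrow> (nat \<Rightarrow> nat \<Rightarrow> real) \<Rightarrow> bool" where
  "mvnormal M p X D \<longleftrightarrow> (\<forall>a.
     (if qform p D a > 0
      then distributed M lborel (\<lambda>\<omega>. \<Sum>i<p. a i * X i \<omega>)
             (\<lambda>x. ennreal (normal_density 0 (sqrt (qform p D a)) x))
      else (AE \<omega> in M. (\<Sum>i<p. a i * X i \<omega>) = 0)))"

definition qrv :: "nat \<Rightarrow> (nat \<Rightarrow> nat \<Rightarrow> real) \<Rightarrow> (nat \<Rightarrow> 'a \<Rightarrow> real) \<Rightarrow> 'a \<Rightarrow> real" where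
  "qrv p W X = (\<lambda>\<omega>. \<Sum>i<p. \<Sum>j<p. X i \<omega> * W i j * X j \<omega>)"

definition stdz :: "nat \<Rightarrow> (nat \<Rightarrow> nat \<Rightarrow> real) \<Rightarrow> (nat \<Rightarrow> 'a \<Rightarrow> real) \<Rightarrow> nat \<Rightarrow> 'a \<Rightarrow> real" where
  "stdz p S X = (\<lambda>i \<omega>. \<Sum>k<p. S i k * X k \<omega>)"

definition W1 :: "(nat \<Rightarrow> 'a measure) \<Rightarrow> (nat \<Rightarrow> 'a \<Rightarrow> real) \<Rightarrow> bool" where
  "W1 M Q \<longleftrightarrow> (\<lambda>p. integral\<^sup>L (M p) (Q p)) \<in> O(\<lambda>p. real p)"

text \<open>var(Q) = O(p^2); finiteness of the variance (Q square integrable) is made explicit.\<close>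
definition W2 :: "(nat \<Rightarrow> 'a measure) \<Rightarrow> (nat \<Rightarrow> 'a \<Rightarrow> real) \<Rightarrow> bool" where
  "W2 M Q \<longleftrightarrow> (\<forall>\<^sub>F p in sequentially. integrable (M p) (\<lambda>\<omega>. (Q p \<omega>)\<^sup>2)) \<and>
     (\<lambda>p. integral\<^sup>L (M p) (\<lambda>\<omega>. (Q p \<omega> - integral\<^sup>L (M p) (Q p))\<^sup>2)) \<in> O(\<lambda>p. (real p)\<^sup>2)"

definition fourth_bounded :: "'a measure \<Rightarrow> nat \<Rightarrow> (nat \<Rightarrow> 'a \<Rightarrow> real) \<Rightarrow> real \<Rightarrow> bool" where
  "fourth_bounded M p e phi \<longleftrightarrow> (\<forall>i<p. \<forall>j<p.
     integrable M (\<lambda>\<omega>. (e i \<omega>)\<^sup>2 * (e j \<omega>)\<^sup>2) \<and>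
     integral\<^sup>L M (\<lambda>\<omega>. (e i \<omega>)\<^sup>2 * (e j \<omega>)\<^sup>2) \<le> phi)"

text \<open>The components of e have symmetric distributions, in the joint sense: the law of
  (e_0,...,e_{p-1}) is invariant under changing the sign of any single component.\<close>
definition sign_symmetric :: "'a measure \<Rightarrow> nat \<Rightarrow> (nat \<Rightarrow> 'a \<Rightarrow> real) \<Rightarrow> bool" where
  "sign_symmetric M p e \<longleftrightarrow> (\<forall>k<p.
     distr M (PiM {..<p} (\<lambda>_. borel)) (\<lambda>\<omega>. \<lambda>i\<in>{..<p}. e i \<omega>) =
     distr M (PiM {..<p} (\<lambda>_. borel)) (\<lambda>\<omega>. \<lambda>i\<in>{..<p}. if i = k then - e i \<omega> else e i \<omega>))"

end

theory Submission
  imports Defs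
begin



lemma qform_cong: "(\<And>i. i < n \<Longrightarrow> a i = b i) \<Longrightarrow> qform n W a = qform n W b"
  unfolding qform_def by (intro sum.cong refl) auto

lemma qform_Suc:
  assumes "sym_mat (Suc n) W"
  shows "qform (Suc n) W a = qform n W a + 2 * a n * (\<Sum>i<n. a i * W i n) + (a n)\<^sup>2 * W n n"
proof -
  have s: "\<And>j. j < n \<Longrightarrow> W n j = W j n" using assms unfolding sym_mat_def by auto
  have "qform (Suc n) W a = (\<Sum>i<n. (\<Sum>j<n. a i * W i j * a j) + a i * W i n * a n)
       + ((\<Sum>j<n. a n * W n j * a j) + a n * W n n * a n)"
    unfolding qform_def by simp
  also have "\<dots> = qform n W a + (\<Sum>i<n. a i * W i n * a n) + (\<Sum>j<n. a n * W n j * a j) + a n * W n n * a n"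
    unfolding qform_def by (simp add: sum.distrib)
  also have "(\<Sum>j<n. a n * W n j * a j) = (\<Sum>i<n. a i * W i n * a n)"
    by (intro sum.cong refl) (simp add: s)
  also have "(\<Sum>i<n. a i * W i n * a n) = a n * (\<Sum>i<n. a i * W i n)"
    by (simp add: sum_distrib_left mult_ac)
  finally show ?thesis by (simp add: power2_eq_square mult_ac)
qed

lemma qform_ind: "i < n \<Longrightarrow> qform n W (\<lambda>j. if j = i then 1 else 0) = W i i"
proof -
  assume i: "i < n"
  have e: "(if i' = i then 1 else 0) * W i' j * (if j = i then 1 else 0) = (if j = i then (if i' = i then W i' j else 0) else 0)" for i' j :: nat
    by auto
  show ?thesis unfolding qform_def e using i by simp
qed

lemma psd_restrict: "psd_mat (Suc n) W \<Longrightarrow> W n n \<ge> 0"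
  using qform_ind[of n "Suc n" W] unfolding psd_mat_def by (metis lessI)

lemma psd_zero_diag:
  assumes "psd_mat (Suc n) W" "W n n = 0" "i < n"
  shows "W i n = 0"
proof (rule ccontr)
  assume ne: "W i n \<noteq> 0"
  define a where "a = (\<lambda>j. if j = i then 1 else 0::real)"
  define t where "t = - (W i i + 1) / (2 * W i n)"
  have sy: "sym_mat (Suc n) W" using assms(1) unfolding psd_mat_def by auto
  have q0: "qform (Suc n) W (a(n := t)) \<ge> 0" using assms(1) unfolding psd_mat_def by auto
  have q1: "qform (Suc n) W (a(n := t)) = qform n W (a(n:=t)) + 2 * (a(n:=t)) n * (\<Sum>k<n. (a(n:=t)) k * W k n) + ((a(n:=t)) n)\<^sup>2 * W n n"
    by (rule qform_Suc[OF sy])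
  have q2: "qform n W (a(n:=t)) = qform n W a"
    by (rule qform_cong) auto
  have q3: "qform n W a = W i i"
    unfolding a_def by (rule qform_ind[OF assms(3)])
  have q4: "(\<Sum>k<n. (a(n:=t)) k * W k n) = (\<Sum>k<n. if k = i then W k n else 0)"
    by (rule sum.cong[OF refl]) (auto simp: a_def)
  have q5: "(\<Sum>k<n. if k = i then W k n else 0) = W i n"
    using assms(3) by (simp only: sum.delta finite_lessThan lessThan_iff if_True)
  have q6: "(a(n:=t)) n = t" by simp
  have "qform (Suc n) W (a(n := t)) = W i i + 2 * t * W i n"
    unfolding q1 q2 q3 q4 q5 q6 assms(2) by simp
  also have "W i i + 2 * t * W i n = -1" unfolding t_def using ne by (simp add: field_simps)
  finally show False using q0 by simp
qed

lemma gram_decomp: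
  "psd_mat n W \<Longrightarrow> \<exists>u. \<forall>i<n. \<forall>j<n. W i j = (\<Sum>k<n. u k i * u k j)"
proof (induction n arbitrary: W)
  case 0
  then show ?case by simp
next
  case (Suc n)
  have sy: "sym_mat (Suc n) W" using Suc.prems unfolding psd_mat_def by auto
  have sy': "\<And>i j. i < Suc n \<Longrightarrow> j < Suc n \<Longrightarrow> W i j = W j i" using sy unfolding sym_mat_def by auto
  define d where "d = W n n"
  have d0: "d \<ge> 0" using psd_restrict[OF Suc.prems] d_def by simp
  define v where "v = (\<lambda>i. W i n / sqrt d)"
  define W' where "W' = (\<lambda>i j. W i j - v i * v j)"
  have vv: "v i * v j = W i n * W j n / d" for i j
    unfolding v_def using d0 by (simp add: real_sqrt_mult[symmetric] power2_eq_square[symmetric] )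
  have psd': "psd_mat n W'"
    unfolding psd_mat_def
  proof
    show "sym_mat n W'" using sy' unfolding sym_mat_def W'_def by (auto simp: mult.commute)
    show "\<forall>a. 0 \<le> qform n W' a"
    proof
      fix a
      define b where "b = (\<Sum>i<n. a i * W i n)"
      have "qform n W' a = qform n W a - (\<Sum>i<n. \<Sum>j<n. a i * (v i * v j) * a j)"
        unfolding qform_def W'_def by (simp add: algebra_simps sum_subtractf)
      also have "(\<Sum>i<n. \<Sum>j<n. a i * (v i * v j) * a j) = (\<Sum>i<n. a i * v i) * (\<Sum>j<n. a j * v j)"
        by (simp add: sum_product mult_ac)
      also have "(\<Sum>i<n. a i * v i) = b / sqrt d"
        unfolding b_def v_def by (simp add: sum_divide_distrib)
      finally have eq: "qform n W' a = qform n W a - (b / sqrt d) * (b / sqrt d)" .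
      show "0 \<le> qform n W' a"
      proof (cases "d = 0")
        case True
        have "qform n W a = qform (Suc n) W (a(n:=0))"
          using qform_Suc[OF sy, of "a(n:=0)"] qform_cong[of n "a(n:=0)" a W] by simp
        then have "qform n W a \<ge> 0" using Suc.prems unfolding psd_mat_def by auto
        then show ?thesis using eq True by simp
      next
        case False
        then have dp: "d > 0" using d0 by simp
        define t where "t = - b / d"
        have "0 \<le> qform (Suc n) W (a(n:=t))" using Suc.prems unfolding psd_mat_def by auto
        also have "qform (Suc n) W (a(n:=t)) = qform n W a + 2 * t * b + t\<^sup>2 * d"
          using qform_Suc[OF sy, of "a(n:=t)"] qform_cong[of n "a(n:=t)" a W]
          unfolding b_def d_def by simp
        also have "\<dots> = qform n W a - (b / sqrt d) * (b / sqrt d)"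
          using dp unfolding t_def by (simp add: field_simps power2_eq_square real_sqrt_mult[symmetric])
        finally show ?thesis using eq by simp
      qed
    qed
  qed
  obtain u where u: "\<And>i j. i < n \<Longrightarrow> j < n \<Longrightarrow> W' i j = (\<Sum>k<n. u k i * u k j)"
    using Suc.IH[OF psd'] by blast
  define u' where "u' = (\<lambda>k i. if k < n then (if i < n then u k i else 0) else v i)"
  have zn: "W i n = v i * v n" if "i < Suc n" for i
  proof (cases "d = 0")
    case True
    then show ?thesis using psd_zero_diag[OF Suc.prems, of i] that unfolding v_def d_def
      by (cases "i = n") auto
  next
    case False
    then show ?thesis using vv[of i n] unfolding d_def by simp
  qed
  show ?case
  proof (intro exI allI impI)
    fix i j assume ij: "i < Suc n" "j < Suc n"
    have "(\<Sum>k<Suc n. u' k i * u' k j) = (\<Sum>k<n. u' k i * u' k j) + v i * v j"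
      unfolding u'_def by simp
    also have "\<dots> = W i j"
    proof (cases "i < n \<and> j < n")
      case True
      then show ?thesis using u[of i j] unfolding u'_def W'_def by simp
    next
      case False
      then have "i = n \<or> j = n" using ij by auto
      then have "(\<Sum>k<n. u' k i * u' k j) = 0" unfolding u'_def by auto
      moreover have "W i j = v i * v j"
        using \<open>i = n \<or> j = n\<close> zn ij sy'[of i j] by (auto simp: mult.commute)
      ultimately show ?thesis by simp
    qed
    finally show "W i j = (\<Sum>k<Suc n. u' k i * u' k j)" by simp
  qed
qed

lemma qform_gram:
  fixes W u :: "nat \<Rightarrow> nat \<Rightarrow> real" and x :: "nat \<Rightarrow> real"
  assumes "\<And>i j. i < n \<Longrightarrow> j < n \<Longrightarrow> W i j = (\<Sum>k<n. u k i * u k j)"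
  shows "(\<Sum>i<n. \<Sum>j<n. x i * W i j * x j) = (\<Sum>k<n. (\<Sum>i<n. u k i * x i)\<^sup>2)"
proof -
  have "(\<Sum>i<n. \<Sum>j<n. x i * W i j * x j) = (\<Sum>i<n. \<Sum>j<n. \<Sum>k<n. x i * u k i * u k j * x j)"
  proof (intro sum.cong refl)
    fix i j assume "i \<in> {..<n}" "j \<in> {..<n}"
    then have "W i j = (\<Sum>k<n. u k i * u k j)" using assms by auto
    then show "x i * W i j * x j = (\<Sum>k<n. x i * u k i * u k j * x j)"
      by (simp add: sum_distrib_left sum_distrib_right mult.assoc)
  qed
  also have "\<dots> = (\<Sum>i<n. \<Sum>k<n. \<Sum>j<n. x i * u k i * u k j * x j)"
    by (rule sum.cong[OF refl], rule sum.swap)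
  also have "\<dots> = (\<Sum>k<n. \<Sum>i<n. \<Sum>j<n. x i * u k i * u k j * x j)"
    by (rule sum.swap)
  also have "\<dots> = (\<Sum>k<n. (\<Sum>i<n. u k i * x i)\<^sup>2)"
    by (simp add: power2_eq_square sum_product mult_ac)
  finally show ?thesis .
qed



lemma L1: "(\<Sum>l\<in>A. a l * (\<Sum>k\<in>B. f l k)) = (\<Sum>k\<in>B. \<Sum>l\<in>A. a l * f l k)" for a :: "nat \<Rightarrow> real"
proof -
  have "(\<Sum>l\<in>A. a l * (\<Sum>k\<in>B. f l k)) = (\<Sum>l\<in>A. \<Sum>k\<in>B. a l * f l k)" by (simp add: sum_distrib_left)
  also have "\<dots> = (\<Sum>k\<in>B. \<Sum>l\<in>A. a l * f l k)" by (rule sum.swap)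
  finally show ?thesis .
qed

lemma L2: "(\<Sum>k\<in>B. (\<Sum>m\<in>A. g m k) * c k) = (\<Sum>m\<in>A. \<Sum>k\<in>B. g m k * c k)" for c :: "nat \<Rightarrow> real"
proof -
  have "(\<Sum>k\<in>B. (\<Sum>m\<in>A. g m k) * c k) = (\<Sum>k\<in>B. \<Sum>m\<in>A. g m k * c k)" by (simp add: sum_distrib_right)
  also have "\<dots> = (\<Sum>m\<in>A. \<Sum>k\<in>B. g m k * c k)" by (rule sum.swap)
  finally show ?thesis .
qed

lemma mm_assoc:
  fixes A B C :: "nat \<Rightarrow> nat \<Rightarrow> real"
  shows "(\<Sum>k<p. (\<Sum>m<p. A i m * B m k) * C k j) = (\<Sum>m<p. A i m * (\<Sum>k<p. B m k * C k j))"
  unfolding L2 by (simp add: sum_distrib_left mult.assoc)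

lemma delta_sum_left:
  fixes B :: "nat \<Rightarrow> nat \<Rightarrow> real"
  shows "i < p \<Longrightarrow> (\<Sum>m<p. (if i = m then 1 else 0) * B m k) = B i k"
proof -
  assume "i < p"
  have "(\<Sum>m<p. (if i = m then 1 else 0) * B m k) = (\<Sum>m<p. if i = m then B m k else 0)"
    by (rule sum.cong) auto
  then show ?thesis using \<open>i < p\<close> by simp
qed

lemma pd_inj:
  assumes "pd_mat p S" "\<And>i. i < p \<Longrightarrow> (\<Sum>k<p. S i k * x k) = 0" "i < p"
  shows "x i = 0"
proof (rule ccontr)
  assume "x i \<noteq> 0"
  then have "qform p S x > 0" using assms(1,3) unfolding pd_mat_def by blast
  moreover have "qform p S x = (\<Sum>i<p. x i * (\<Sum>k<p. S i k * x k))"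
    unfolding qform_def by (simp add: sum_distrib_left mult.assoc)
  ultimately show False using assms(2) by simp
qed

lemma inv_sqrt_sym: "is_inv_sqrt p D S \<Longrightarrow> i < p \<Longrightarrow> j < p \<Longrightarrow> S i j = S j i"
  unfolding is_inv_sqrt_def pd_mat_def sym_mat_def by auto

lemma inv_sqrt_SDS:
  "is_inv_sqrt p D S \<Longrightarrow> i < p \<Longrightarrow> j < p \<Longrightarrow>
     (\<Sum>k<p. (\<Sum>m<p. S i m * D m k) * S k j) = (if i = j then 1 else 0)"
  unfolding is_inv_sqrt_def is_id_mat_def mat_mult_def by auto

lemma swap3:
  fixes a :: "nat \<Rightarrow> real"
  shows "(\<Sum>l<p. a l * (\<Sum>k<p. X l k * c k)) = (\<Sum>k<p. (\<Sum>l<p. a l * X l k) * c k)"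
proof -
  have "(\<Sum>l<p. a l * (\<Sum>k<p. X l k * c k)) = (\<Sum>k<p. \<Sum>l<p. a l * (X l k * c k))" by (rule L1)
  also have "\<dots> = (\<Sum>k<p. (\<Sum>l<p. a l * X l k) * c k)" by (simp add: sum_distrib_right mult.assoc)
  finally show ?thesis .
qed

lemma inv_sqrt_DSS:
  assumes S: "is_inv_sqrt p D S" and ij: "i < p" "j < p"
  shows "(\<Sum>k<p. (\<Sum>m<p. D i m * S m k) * S k j) = (if i = j then 1 else 0)"
proof -
  define T where "T = (\<lambda>l j. (\<Sum>k<p. (\<Sum>m<p. D l m * S m k) * S k j) - (if l = j then 1 else 0))"
  have "T i j = 0"
  proof (rule pd_inj[of p S "\<lambda>l. T l j"])
    show "pd_mat p S" using S unfolding is_inv_sqrt_def by auto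
    show "i < p" by fact
    fix r assume r: "r < p"
    have dd: "(\<Sum>l<p. S r l * (if l = j then 1 else 0)) = (\<Sum>l<p. if l = j then S r l else 0)"
      by (intro sum.cong) auto
    have "(\<Sum>l<p. S r l * T l j) = (\<Sum>l<p. S r l * (\<Sum>k<p. (\<Sum>m<p. D l m * S m k) * S k j)) - (\<Sum>l<p. S r l * (if l = j then 1 else 0))"
      unfolding T_def by (simp add: right_diff_distrib sum_subtractf)
    also have "(\<Sum>l<p. S r l * (if l = j then 1 else 0)) = S r j" unfolding dd using ij by simp
    also have "(\<Sum>l<p. S r l * (\<Sum>k<p. (\<Sum>m<p. D l m * S m k) * S k j))
        = (\<Sum>k<p. (\<Sum>l<p. S r l * (\<Sum>m<p. D l m * S m k)) * S k j)"
      by (rule swap3)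
    also have "\<dots> = (\<Sum>k<p. (\<Sum>m<p. (\<Sum>l<p. S r l * D l m) * S m k) * S k j)"
      by (simp only: mm_assoc)
    also have "\<dots> = (\<Sum>k<p. (if r = k then 1 else 0) * S k j)"
      using inv_sqrt_SDS[OF S r] by (intro sum.cong refl) simp
    also have "\<dots> = S r j" using r by (simp add: delta_sum_left)
    finally show "(\<Sum>l<p. S r l * T l j) = 0" by simp
  qed
  then show ?thesis unfolding T_def by simp
qed

lemma inverse_W_SS:
  assumes S: "is_inv_sqrt p D S" and W: "is_inverse_mat p W D" and ij: "i < p" "j < p"
  shows "W i j = (\<Sum>k<p. S k i * S k j)"
proof -
  have WD: "\<And>i j. i < p \<Longrightarrow> j < p \<Longrightarrow> (\<Sum>k<p. W i k * D k j) = (if i = j then 1 else 0)"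
    using W unfolding is_inverse_mat_def is_id_mat_def mat_mult_def by auto
  have dd: "(\<Sum>l<p. W i l * (if l = j then 1 else 0)) = (\<Sum>l<p. if l = j then W i l else 0)"
    by (intro sum.cong) auto
  have "W i j = (\<Sum>l<p. W i l * (if l = j then 1 else 0))"
    unfolding dd using ij by simp
  also have "\<dots> = (\<Sum>l<p. W i l * (\<Sum>k<p. (\<Sum>m<p. D l m * S m k) * S k j))"
    using inv_sqrt_DSS[OF S _ ij(2)] by (intro sum.cong refl) simp
  also have "\<dots> = (\<Sum>k<p. (\<Sum>l<p. W i l * (\<Sum>m<p. D l m * S m k)) * S k j)"
    by (rule swap3)
  also have "\<dots> = (\<Sum>k<p. (\<Sum>m<p. (\<Sum>l<p. W i l * D l m) * S m k) * S k j)"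
    by (simp only: mm_assoc)
  also have "\<dots> = (\<Sum>k<p. (\<Sum>m<p. (if i = m then 1 else 0) * S m k) * S k j)"
    using WD[OF ij(1)] by (intro sum.cong refl) simp
  also have "\<dots> = (\<Sum>k<p. S i k * S k j)"
    using ij by (intro sum.cong refl) (simp add: delta_sum_left)
  also have "\<dots> = (\<Sum>k<p. S k i * S k j)"
    using inv_sqrt_sym[OF S] ij by (intro sum.cong refl) simp
  finally show ?thesis .
qed

lemma eps_from_e:
  fixes x :: "nat \<Rightarrow> real"
  assumes S: "is_inv_sqrt p D S" and i: "i < p"
  shows "x i = (\<Sum>k<p. (\<Sum>m<p. D i m * S m k) * (\<Sum>j<p. S k j * x j))"
proof -
  have "(\<Sum>k<p. (\<Sum>m<p. D i m * S m k) * (\<Sum>j<p. S k j * x j))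
      = (\<Sum>k<p. \<Sum>j<p. ((\<Sum>m<p. D i m * S m k) * S k j) * x j)"
    by (simp add: sum_distrib_left mult.assoc)
  also have "\<dots> = (\<Sum>j<p. \<Sum>k<p. ((\<Sum>m<p. D i m * S m k) * S k j) * x j)"
    by (rule sum.swap)
  also have "\<dots> = (\<Sum>j<p. (\<Sum>k<p. (\<Sum>m<p. D i m * S m k) * S k j) * x j)"
    by (simp only: sum_distrib_right)
  also have "\<dots> = (\<Sum>j<p. (if i = j then 1 else 0) * x j)"
    using inv_sqrt_DSS[OF S i] by (intro sum.cong refl) simp
  also have "\<dots> = (\<Sum>j<p. if j = i then x j else 0)" by (intro sum.cong) auto
  also have "\<dots> = x i" using i by simp
  finally show ?thesis by simp
qed

lemma cov_e:
  assumes S: "is_inv_sqrt p D S" and ij: "i < p" "j < p"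
  shows "(\<Sum>a<p. \<Sum>b<p. S i a * S j b * D a b) = (if i = j then 1 else 0)"
proof -
  have "(\<Sum>a<p. \<Sum>b<p. S i a * S j b * D a b) = (\<Sum>b<p. \<Sum>a<p. S i a * S j b * D a b)"
    by (rule sum.swap)
  also have "\<dots> = (\<Sum>b<p. (\<Sum>a<p. S i a * D a b) * S b j)"
    using inv_sqrt_sym[OF S _ ij(2)] by (intro sum.cong refl) (simp add: sum_distrib_left sum_distrib_right mult_ac)
  finally show ?thesis using inv_sqrt_SDS[OF S ij] by simp
qed



lemma aux1: "(y::real)^2 \<le> 1 + y^4"
proof -
  have "1 + y^4 - y^2 = (y^2 - 1/2)^2 + 3/4" by (simp add: power2_eq_square power4_eq_xxxx algebra_simps)
  moreover have "(y^2 - 1/2)^2 \<ge> 0" by simp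
  ultimately show ?thesis by linarith
qed
lemma aux2: "2 * ((a::real)^2 * b^2) \<le> a^4 + b^4"
proof -
  have "a^4 + b^4 - 2 * (a^2 * b^2) = (a^2 - b^2)^2" by (simp add: power2_eq_square power4_eq_xxxx algebra_simps)
  moreover have "(a^2 - b^2)^2 \<ge> 0" by simp
  ultimately show ?thesis by linarith
qed
lemma aux3: "(a::real)^2 * b^2 \<le> a^4 + b^4"
proof -
  have "0 \<le> a^2 * b^2" by simp
  then show ?thesis using aux2[of a b] by linarith
qed
lemma aux4: "t > 0 \<Longrightarrow> (a::real)^2 * b^2 \<le> (t * a^4 + b^4 / t) / 2"
proof -
  assume t: "t > 0"
  have "(t * a^4 + b^4 / t) / 2 - a^2 * b^2 = (t * a^2 - b^2)^2 / (2 * t)"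
    using t by (simp add: power2_eq_square power4_eq_xxxx field_simps)
  moreover have "(t * a^2 - b^2)^2 / (2 * t) \<ge> 0" using t by simp
  ultimately show ?thesis by linarith
qed


lemma int_dom:
  fixes f g :: "'a \<Rightarrow> real"
  assumes "integrable M f" "g \<in> borel_measurable M" "\<And>x. x \<in> space M \<Longrightarrow> \<bar>g x\<bar> \<le> f x"
  shows "integrable M g"
proof (rule Bochner_Integration.integrable_bound[OF assms(1,2)])
  show "AE x in M. norm (g x) \<le> norm (f x)"
    using assms(3) by (intro AE_I2) (force simp: abs_le_iff)
qed

context prob_space
begin

lemma sq_from_4:
  fixes X :: "'a \<Rightarrow> real"
  assumes "X \<in> borel_measurable M" "integrable M (\<lambda>x. (X x)^4)"
  shows "integrable M (\<lambda>x. (X x)\<^sup>2)"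
proof (rule int_dom[of _ "\<lambda>x. 1 + (X x)^4"])
  show "integrable M (\<lambda>x. 1 + (X x)^4)" using assms(2) by simp
  show "(\<lambda>x. (X x)\<^sup>2) \<in> borel_measurable M" using assms(1) by simp
  fix x
  have "(X x)\<^sup>2 \<le> 1 + (X x)^4" by (rule aux1)
  then show "\<bar>(X x)\<^sup>2\<bar> \<le> 1 + (X x)^4" by simp
qed

lemma prod_sq_int:
  fixes X Y :: "'a \<Rightarrow> real"
  assumes "X \<in> borel_measurable M" "Y \<in> borel_measurable M"
    "integrable M (\<lambda>x. (X x)^4)" "integrable M (\<lambda>x. (Y x)^4)"
  shows "integrable M (\<lambda>x. (X x)\<^sup>2 * (Y x)\<^sup>2)"
proof (rule int_dom[of _ "\<lambda>x. (X x)^4 + (Y x)^4"])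
  show "integrable M (\<lambda>x. (X x)^4 + (Y x)^4)" using assms by simp
  show "(\<lambda>x. (X x)\<^sup>2 * (Y x)\<^sup>2) \<in> borel_measurable M" using assms by simp
  fix x
  have "(X x)\<^sup>2 * (Y x)\<^sup>2 \<le> (X x)^4 + (Y x)^4" by (rule aux3)
  then show "\<bar>(X x)\<^sup>2 * (Y x)\<^sup>2\<bar> \<le> (X x)^4 + (Y x)^4" by simp
qed

lemma zero4:
  fixes X Y :: "'a \<Rightarrow> real"
  assumes "X \<in> borel_measurable M" "Y \<in> borel_measurable M"
    "integrable M (\<lambda>x. (X x)^4)" "expectation (\<lambda>x. (X x)^4) \<le> 0"
  shows "expectation (\<lambda>x. (X x)\<^sup>2 * (Y x)\<^sup>2) = 0"
proof -
  have "0 \<le> expectation (\<lambda>x. (X x)^4)"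
    by (rule integral_nonneg_AE) (simp add: AE_I2 zero_le_even_power)
  then have "expectation (\<lambda>x. (X x)^4) = 0"
    using assms(4) by linarith
  then have "AE x in M. (X x)^4 = 0"
    using integral_nonneg_eq_0_iff_AE[OF assms(3)] by (simp add: AE_I2)
  then have "AE x in M. (X x)\<^sup>2 * (Y x)\<^sup>2 = 0" by eventually_elim simp
  then show ?thesis by (rule integral_eq_zero_AE)
qed

lemma pair_bound:
  fixes X Y :: "'a \<Rightarrow> real"
  assumes mX: "X \<in> borel_measurable M" and mY: "Y \<in> borel_measurable M"
    and iX: "integrable M (\<lambda>x. (X x)^4)" and iY: "integrable M (\<lambda>x. (Y x)^4)"
    and bX: "expectation (\<lambda>x. (X x)^4) \<le> C * (expectation (\<lambda>x. (X x)\<^sup>2))\<^sup>2"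
    and bY: "expectation (\<lambda>x. (Y x)^4) \<le> C * (expectation (\<lambda>x. (Y x)\<^sup>2))\<^sup>2"
    and C: "C \<ge> 0"
  shows "expectation (\<lambda>x. (X x)\<^sup>2 * (Y x)\<^sup>2) \<le> C * expectation (\<lambda>x. (X x)\<^sup>2) * expectation (\<lambda>x. (Y x)\<^sup>2)"
proof -
  define a where "a = expectation (\<lambda>x. (X x)\<^sup>2)"
  define b where "b = expectation (\<lambda>x. (Y x)\<^sup>2)"
  have a0: "a \<ge> 0" unfolding a_def by (simp add: integral_nonneg_AE AE_I2)
  have b0: "b \<ge> 0" unfolding b_def by (simp add: integral_nonneg_AE AE_I2)
  show ?thesis
  proof (cases "a = 0 \<or> b = 0")
    case True
    then show ?thesis
    proof
      assume "a = 0"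
      then have "expectation (\<lambda>x. (X x)\<^sup>2 * (Y x)\<^sup>2) = 0"
        using zero4[OF mX mY iX] bX unfolding a_def by simp
      then show ?thesis using \<open>a = 0\<close> unfolding a_def by simp
    next
      assume "b = 0"
      then have "expectation (\<lambda>x. (Y x)\<^sup>2 * (X x)\<^sup>2) = 0"
        using zero4[OF mY mX iY] bY unfolding b_def by simp
      then show ?thesis using \<open>b = 0\<close> unfolding b_def by (simp add: mult.commute)
    qed
  next
    case False
    then have ap: "a > 0" and bp: "b > 0" using a0 b0 by auto
    define t where "t = b / a"
    have tp: "t > 0" unfolding t_def using ap bp by simp
    have pt: "(X x)\<^sup>2 * (Y x)\<^sup>2 \<le> (t * (X x)^4 + (Y x)^4 / t) / 2" for x
      using aux4[OF tp] .
    have "expectation (\<lambda>x. (X x)\<^sup>2 * (Y x)\<^sup>2) \<le> expectation (\<lambda>x. (t * (X x)^4 + (Y x)^4 / t) / 2)"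
      by (rule integral_mono[OF prod_sq_int[OF mX mY iX iY]]) (use iX iY pt in auto)
    also have "\<dots> = (t * expectation (\<lambda>x. (X x)^4) + expectation (\<lambda>x. (Y x)^4) / t) / 2"
      using iX iY by simp
    also have "\<dots> \<le> (t * (C * a\<^sup>2) + (C * b\<^sup>2) / t) / 2"
      using bX bY tp unfolding a_def b_def
      by (intro divide_right_mono add_mono mult_left_mono divide_right_mono) auto
    also have "\<dots> = C * a * b" unfolding t_def using ap bp by (simp add: field_simps power2_eq_square)
    finally show ?thesis unfolding a_def b_def .
  qed
qed

lemma core:
  fixes Y :: "nat \<Rightarrow> 'a \<Rightarrow> real"
  assumes m: "\<And>k. k < n \<Longrightarrow> Y k \<in> borel_measurable M"
    and i4: "\<And>k. k < n \<Longrightarrow> integrable M (\<lambda>x. (Y k x)^4)"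
    and b: "\<And>k. k < n \<Longrightarrow> expectation (\<lambda>x. (Y k x)^4) \<le> C * (expectation (\<lambda>x. (Y k x)\<^sup>2))\<^sup>2"
    and C: "C \<ge> 0"
  shows "integrable M (\<lambda>x. (\<Sum>k<n. (Y k x)\<^sup>2)\<^sup>2)"
    and "integrable M (\<lambda>x. (\<Sum>k<n. (Y k x)\<^sup>2))"
    and "expectation (\<lambda>x. (\<Sum>k<n. (Y k x)\<^sup>2)\<^sup>2) \<le> C * (expectation (\<lambda>x. (\<Sum>k<n. (Y k x)\<^sup>2)))\<^sup>2"
proof -
  have sq: "(\<Sum>k<n. (Y k x)\<^sup>2)\<^sup>2 = (\<Sum>k<n. \<Sum>l<n. (Y k x)\<^sup>2 * (Y l x)\<^sup>2)" for x
    by (simp add: power2_eq_square sum_product)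
  have ip: "integrable M (\<lambda>x. (Y k x)\<^sup>2 * (Y l x)\<^sup>2)" if "k < n" "l < n" for k l
    using prod_sq_int[OF m m i4 i4] that by auto
  have i2: "integrable M (\<lambda>x. (Y k x)\<^sup>2)" if "k < n" for k
    using sq_from_4[OF m i4] that by auto
  show "integrable M (\<lambda>x. (\<Sum>k<n. (Y k x)\<^sup>2)\<^sup>2)"
    unfolding sq using ip by (intro Bochner_Integration.integrable_sum) auto
  show "integrable M (\<lambda>x. (\<Sum>k<n. (Y k x)\<^sup>2))" using i2 by (intro Bochner_Integration.integrable_sum) auto
  have "expectation (\<lambda>x. (\<Sum>k<n. (Y k x)\<^sup>2)\<^sup>2) = (\<Sum>k<n. expectation (\<lambda>x. \<Sum>l<n. (Y k x)\<^sup>2 * (Y l x)\<^sup>2))"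
    unfolding sq by (rule Bochner_Integration.integral_sum) (use ip in \<open>auto intro!: Bochner_Integration.integrable_sum\<close>)
  also have "\<dots> = (\<Sum>k<n. \<Sum>l<n. expectation (\<lambda>x. (Y k x)\<^sup>2 * (Y l x)\<^sup>2))"
    by (intro sum.cong refl Bochner_Integration.integral_sum) (use ip in auto)
  also have "\<dots> \<le> (\<Sum>k<n. \<Sum>l<n. C * expectation (\<lambda>x. (Y k x)\<^sup>2) * expectation (\<lambda>x. (Y l x)\<^sup>2))"
    by (intro sum_mono pair_bound m i4 b C) auto
  also have "\<dots> = C * (\<Sum>k<n. expectation (\<lambda>x. (Y k x)\<^sup>2))\<^sup>2"
    by (simp add: power2_eq_square sum_product sum_distrib_left mult_ac)
  also have "(\<Sum>k<n. expectation (\<lambda>x. (Y k x)\<^sup>2)) = expectation (\<lambda>x. (\<Sum>k<n. (Y k x)\<^sup>2))"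
    using i2 by (subst Bochner_Integration.integral_sum) auto
  finally show "expectation (\<lambda>x. (\<Sum>k<n. (Y k x)\<^sup>2)\<^sup>2) \<le> C * (expectation (\<lambda>x. (\<Sum>k<n. (Y k x)\<^sup>2)))\<^sup>2" .
qed

lemma var_le:
  fixes Q :: "'a \<Rightarrow> real"
  assumes "integrable M Q" "integrable M (\<lambda>x. (Q x)\<^sup>2)"
  shows "expectation (\<lambda>x. (Q x - expectation Q)\<^sup>2) \<le> expectation (\<lambda>x. (Q x)\<^sup>2)"
  using variance_eq[OF assms] by simp

end

context prob_space begin
lemma normal_4:
  fixes Y :: "'a \<Rightarrow> real"
  assumes s: "0 < \<sigma>" and D: "distributed M lborel Y (\<lambda>x. ennreal (normal_density 0 \<sigma> x))"
  shows "integrable M (\<lambda>x. (Y x)^4)"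
    and "expectation (\<lambda>x. (Y x)^4) = 3 * (expectation (\<lambda>x. (Y x)\<^sup>2))\<^sup>2"
proof -
  have nn: "\<And>x. 0 \<le> normal_density 0 \<sigma> x" by simp
  have i4: "integrable lborel (\<lambda>x. normal_density 0 \<sigma> x * x ^ 4)"
    using integrable_normal_moment[where \<sigma>=\<sigma> and \<mu>=0 and k=4] s by simp
  show "integrable M (\<lambda>x. (Y x)^4)"
    using distributed_integrable[OF D, of "\<lambda>x. x^4"] i4 by simp
  have e4: "expectation (\<lambda>x. (Y x)^4) = 3 * \<sigma>^4"
  proof -
    have "expectation (\<lambda>x. (Y x)^4) = (\<integral>x. normal_density 0 \<sigma> x * x^4 \<partial>lborel)"
      using distributed_integral[OF D, of "\<lambda>x. x^4"] by simp
    also have "\<dots> = fact (2 * 2) / ((2 / \<sigma>\<^sup>2)^2 * fact 2)"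
      using has_bochner_integral_integral_eq[OF normal_moment_even[OF s, of 0 2]] by simp
    also have "\<dots> = 3 * \<sigma>^4" using s by (simp add: fact_numeral field_simps power2_eq_square power4_eq_xxxx)
    finally show ?thesis .
  qed
  have e2: "expectation (\<lambda>x. (Y x)\<^sup>2) = \<sigma>\<^sup>2"
  proof -
    have "expectation (\<lambda>x. (Y x)\<^sup>2) = (\<integral>x. normal_density 0 \<sigma> x * x^(2*1) \<partial>lborel)"
      using distributed_integral[OF D, of "\<lambda>x. x^2"] by simp
    also have "\<dots> = fact (2 * 1) / ((2 / \<sigma>\<^sup>2)^1 * fact 1)"
      using has_bochner_integral_integral_eq[OF normal_moment_even[OF s, of 0 1]] by simp
    also have "\<dots> = \<sigma>\<^sup>2" using s by (simp add: field_simps)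
    finally show ?thesis .
  qed
  show "expectation (\<lambda>x. (Y x)^4) = 3 * (expectation (\<lambda>x. (Y x)\<^sup>2))\<^sup>2"
    unfolding e4 e2 by (simp add: power2_eq_square power4_eq_xxxx)
qed

lemma zero_4:
  fixes Y :: "'a \<Rightarrow> real"
  assumes "AE x in M. Y x = 0" "Y \<in> borel_measurable M"
  shows "integrable M (\<lambda>x. (Y x)^4)" "expectation (\<lambda>x. (Y x)^4) = 0"
proof -
  have ae: "AE x in M. (Y x)^4 = 0" using assms(1) by eventually_elim simp
  show "integrable M (\<lambda>x. (Y x)^4)"
  proof (rule integrable_cong_AE_imp[where g="\<lambda>x. 0"])
    show "integrable M (\<lambda>x. 0::real)" by simp
    show "(\<lambda>x. (Y x)^4) \<in> borel_measurable M" using assms(2) by simp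
    show "AE x in M. 0 = (Y x)^4" using ae by eventually_elim simp
  qed
  show "expectation (\<lambda>x. (Y x)^4) = 0" by (rule integral_eq_zero_AE) (rule ae)
qed
end


context prob_space begin

lemma odd_sym:
  fixes e :: "nat \<Rightarrow> 'a \<Rightarrow> real"
  assumes meas: "\<And>i. i < p \<Longrightarrow> e i \<in> borel_measurable M"
    and sym: "sign_symmetric M p e"
    and idx: "x < p" "j < p" "k < p" "l < p" "x \<noteq> j" "x \<noteq> k" "x \<noteq> l"
  shows "expectation (\<lambda>\<omega>. e x \<omega> * e j \<omega> * e k \<omega> * e l \<omega>) = 0"
proof -
  define N where "N = PiM {..<p} (\<lambda>_. borel::real measure)"
  define g where "g = (\<lambda>f::nat\<Rightarrow>real. f x * f j * f k * f l)"
  define T1 where "T1 = (\<lambda>\<omega>. \<lambda>i\<in>{..<p}. e i \<omega>)"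
  define T2 where "T2 = (\<lambda>\<omega>. \<lambda>i\<in>{..<p}. if i = x then - e i \<omega> else e i \<omega>)"
  have gm: "g \<in> borel_measurable N" unfolding g_def N_def using idx by (auto intro!: borel_measurable_times measurable_component_singleton)
  have T1m: "T1 \<in> measurable M N" unfolding T1_def N_def
    by (rule measurable_restrict) (use meas in auto)
  have T2m: "T2 \<in> measurable M N" unfolding T2_def N_def
    by (rule measurable_restrict) (use meas in auto)
  have "distr M N T1 = distr M N T2"
    using sym idx(1) unfolding sign_symmetric_def N_def T1_def T2_def by blast
  then have "integral\<^sup>L (distr M N T1) g = integral\<^sup>L (distr M N T2) g" by simp
  then have "(\<integral>\<omega>. g (T1 \<omega>) \<partial>M) = (\<integral>\<omega>. g (T2 \<omega>) \<partial>M)"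
    using integral_distr[OF T1m gm] integral_distr[OF T2m gm] by simp
  moreover have "\<And>\<omega>. g (T1 \<omega>) = e x \<omega> * e j \<omega> * e k \<omega> * e l \<omega>"
    unfolding g_def T1_def using idx by simp
  moreover have "\<And>\<omega>. g (T2 \<omega>) = - (e x \<omega> * e j \<omega> * e k \<omega> * e l \<omega>)"
    unfolding g_def T2_def using idx by simp
  ultimately have "expectation (\<lambda>\<omega>. e x \<omega> * e j \<omega> * e k \<omega> * e l \<omega>)
     = - expectation (\<lambda>\<omega>. e x \<omega> * e j \<omega> * e k \<omega> * e l \<omega>)"
    by simp
  then show ?thesis by simp
qed

lemma odd_indep:
  fixes e :: "nat \<Rightarrow> 'a \<Rightarrow> real"
  assumes ind: "indep_vars (\<lambda>_. borel) e {..<p}"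
    and idx: "x < p" "j < p" "k < p" "l < p" "x \<noteq> j" "x \<noteq> k" "x \<noteq> l"
    and ix: "integrable M (e x)" and mx: "expectation (e x) = 0"
    and ir: "integrable M (\<lambda>\<omega>. e j \<omega> * e k \<omega> * e l \<omega>)"
  shows "expectation (\<lambda>\<omega>. e x \<omega> * e j \<omega> * e k \<omega> * e l \<omega>) = 0"
proof -
  have "indep_var (PiM {x} (\<lambda>_. borel)) (\<lambda>\<omega>. restrict (\<lambda>i. e i \<omega>) {x})
                  (PiM {j,k,l} (\<lambda>_. borel)) (\<lambda>\<omega>. restrict (\<lambda>i. e i \<omega>) {j,k,l})"
    by (rule indep_var_restrict[OF ind]) (use idx in auto)
  then have "indep_var borel ((\<lambda>f. f x) \<circ> (\<lambda>\<omega>. restrict (\<lambda>i. e i \<omega>) {x}))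
                  borel ((\<lambda>f. f j * f k * f l) \<circ> (\<lambda>\<omega>. restrict (\<lambda>i. e i \<omega>) {j,k,l}))"
    by (rule indep_var_compose) measurable
  also have "((\<lambda>f. f x) \<circ> (\<lambda>\<omega>. restrict (\<lambda>i. e i \<omega>) {x})) = e x"
    by (auto simp: fun_eq_iff)
  also have "((\<lambda>f. f j * f k * f l) \<circ> (\<lambda>\<omega>. restrict (\<lambda>i. e i \<omega>) {j,k,l})) = (\<lambda>\<omega>. e j \<omega> * e k \<omega> * e l \<omega>)"
    by (auto simp: fun_eq_iff)
  finally have iv: "indep_var borel (e x) borel (\<lambda>\<omega>. e j \<omega> * e k \<omega> * e l \<omega>)" .
  have "expectation (\<lambda>\<omega>. e x \<omega> * e j \<omega> * e k \<omega> * e l \<omega>)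
      = expectation (\<lambda>\<omega>. e x \<omega> * (e j \<omega> * e k \<omega> * e l \<omega>))"
    by (simp add: mult.assoc)
  also have "\<dots> = expectation (e x) * expectation (\<lambda>\<omega>. e j \<omega> * e k \<omega> * e l \<omega>)"
    by (rule indep_var_lebesgue_integral[OF iv ix ir])
  finally show ?thesis using mx by simp
qed

end


lemma pow4_sum: "(\<Sum>i\<in>A. a i)^4 = (\<Sum>l\<in>A. \<Sum>k\<in>A. \<Sum>j\<in>A. \<Sum>i\<in>A. a i * a j * a k * a l)" for a :: "nat \<Rightarrow> real"
proof -
  have "(\<Sum>i\<in>A. a i)^4 = (\<Sum>i\<in>A. a i) * (\<Sum>j\<in>A. a j) * (\<Sum>k\<in>A. a k) * (\<Sum>l\<in>A. a l)"
    by (simp add: power4_eq_xxxx)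
  also have "\<dots> = (\<Sum>l\<in>A. \<Sum>k\<in>A. \<Sum>j\<in>A. \<Sum>i\<in>A. a i * a j * a k * a l)"
    by (simp add: sum_distrib_left sum_distrib_right)
  finally show ?thesis .
qed
lemma const_if_sum: "(\<Sum>j\<in>A. if P then f j else 0) = (if P then (\<Sum>j\<in>A. f j) else 0)"
  by (cases P) auto
lemma B1: "(\<Sum>l<p. \<Sum>k<p. \<Sum>j<p. \<Sum>i<p. if i = j then (if k = l then f j l else 0) else 0) = (\<Sum>l<p. \<Sum>j<p. f j l)" for f :: "nat \<Rightarrow> nat \<Rightarrow> real"
proof -
  have "(\<Sum>l<p. \<Sum>k<p. \<Sum>j<p. \<Sum>i<p. if i = j then (if k = l then f j l else 0) else 0)
     = (\<Sum>l<p. \<Sum>k<p. \<Sum>j<p. if k = l then f j l else 0)" by (intro sum.cong refl) simp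
  also have "\<dots> = (\<Sum>l<p. \<Sum>k<p. if k = l then (\<Sum>j<p. f j l) else 0)"
    by (simp only: const_if_sum)
  also have "\<dots> = (\<Sum>l<p. \<Sum>j<p. f j l)" by (rule sum.cong[OF refl]) simp
  finally show ?thesis .
qed
lemma B2: "(\<Sum>l<p. \<Sum>k<p. \<Sum>j<p. \<Sum>i<p. if i = k then (if j = l then f k l else 0) else 0) = (\<Sum>l<p. \<Sum>k<p. f k l)" for f :: "nat \<Rightarrow> nat \<Rightarrow> real"
proof -
  have "(\<Sum>l<p. \<Sum>k<p. \<Sum>j<p. \<Sum>i<p. if i = k then (if j = l then f k l else 0) else 0)
     = (\<Sum>l<p. \<Sum>k<p. \<Sum>j<p. if j = l then f k l else 0)" by (intro sum.cong refl) simp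
  also have "\<dots> = (\<Sum>l<p. \<Sum>k<p. f k l)" by (intro sum.cong refl) simp
  finally show ?thesis .
qed
lemma B3: "(\<Sum>l<p. \<Sum>k<p. \<Sum>j<p. \<Sum>i<p. if i = l then (if j = k then f l k else 0) else 0) = (\<Sum>l<p. \<Sum>k<p. f l k)" for f :: "nat \<Rightarrow> nat \<Rightarrow> real"
proof -
  have "(\<Sum>l<p. \<Sum>k<p. \<Sum>j<p. \<Sum>i<p. if i = l then (if j = k then f l k else 0) else 0)
     = (\<Sum>l<p. \<Sum>k<p. \<Sum>j<p. if j = k then f l k else 0)" by (intro sum.cong refl) simp
  also have "\<dots> = (\<Sum>l<p. \<Sum>k<p. f l k)" by (intro sum.cong refl) simp
  finally show ?thesis .
qed
lemma sqsum: "(\<Sum>l<p. \<Sum>k<p. (w k)\<^sup>2 * (w l)\<^sup>2) = (\<Sum>i<p. (w i)\<^sup>2)\<^sup>2" for w :: "nat \<Rightarrow> real"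
  by (simp add: power2_eq_square[of "sum _ _"] sum_product mult.commute)
lemma aux6: "\<bar>(a::real) * b\<bar> \<le> a\<^sup>2 + b\<^sup>2"
proof -
  have "0 \<le> (\<bar>a\<bar> - \<bar>b\<bar>)\<^sup>2" by simp
  then have "2 * (\<bar>a\<bar> * \<bar>b\<bar>) \<le> a\<^sup>2 + b\<^sup>2" by (simp add: power2_eq_square algebra_simps)
  moreover have "0 \<le> \<bar>a\<bar> * \<bar>b\<bar>" by simp
  ultimately have "\<bar>a\<bar> * \<bar>b\<bar> \<le> a\<^sup>2 + b\<^sup>2" by linarith
  then show ?thesis by (simp add: abs_mult)
qed
lemma aux5: "\<bar>(a::real) * b * c * d\<bar> \<le> a\<^sup>2 * b\<^sup>2 + c\<^sup>2 * d\<^sup>2"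
  using aux6[of "a*b" "c*d"] by (simp add: power_mult_distrib mult.assoc)
lemma aux7: "\<bar>(a::real) * b * c\<bar> \<le> a\<^sup>2 * b\<^sup>2 + c\<^sup>2"
  using aux6[of "a*b" c] by (simp add: power_mult_distrib)

lemma aux1': "(y::real)\<^sup>2 \<le> 1 + y\<^sup>2 * y\<^sup>2"
  using aux1[of y] by (simp add: power2_eq_square power4_eq_xxxx)

lemma unique_idx:
  "\<not>(i=j\<and>k=l) \<Longrightarrow> \<not>(i=k\<and>j=l) \<Longrightarrow> \<not>(i=l\<and>j=k) \<Longrightarrow>
   (i\<noteq>j\<and>i\<noteq>k\<and>i\<noteq>l) \<or> (j\<noteq>i\<and>j\<noteq>k\<and>j\<noteq>l) \<or> (k\<noteq>i\<and>k\<noteq>j\<and>k\<noteq>l) \<or> (l\<noteq>i\<and>l\<noteq>j\<and>l\<noteq>k)"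
  for i j k l :: nat by blast

lemma term_bound:
  fixes c m phi X Y :: real
  assumes "0 \<le> c" "m \<le> phi" "0 \<le> X" "0 \<le> Y" "0 \<le> phi"
  shows "c * m \<le> phi * (c + X + Y)"
proof -
  have "c * m \<le> c * phi" using assms by (intro mult_left_mono) auto
  also have "\<dots> \<le> phi * (c + X + Y)" using assms by (simp add: algebra_simps)
  finally show ?thesis .
qed

context prob_space begin

lemma E_sum: "(\<And>i. i < n \<Longrightarrow> integrable M (f i)) \<Longrightarrow> expectation (\<lambda>\<omega>. \<Sum>i<n. f i \<omega>) = (\<Sum>i<n. expectation (f i))"
  by (rule Bochner_Integration.integral_sum) auto

lemma E_sum4:
  fixes F :: "nat \<Rightarrow> nat \<Rightarrow> nat \<Rightarrow> nat \<Rightarrow> 'a \<Rightarrow> real"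
  assumes "\<And>i j k l. i<n \<Longrightarrow> j<n \<Longrightarrow> k<n \<Longrightarrow> l<n \<Longrightarrow> integrable M (F i j k l)"
  shows "expectation (\<lambda>\<omega>. \<Sum>l<n. \<Sum>k<n. \<Sum>j<n. \<Sum>i<n. c i j k l * F i j k l \<omega>)
       = (\<Sum>l<n. \<Sum>k<n. \<Sum>j<n. \<Sum>i<n. c i j k l * expectation (F i j k l))"
proof -
  have I1: "integrable M (\<lambda>\<omega>. \<Sum>i<n. c i j k l * F i j k l \<omega>)" if "j<n" "k<n" "l<n" for j k l
    using assms that by (intro Bochner_Integration.integrable_sum integrable_mult_right) auto
  have I2: "integrable M (\<lambda>\<omega>. \<Sum>j<n. \<Sum>i<n. c i j k l * F i j k l \<omega>)" if "k<n" "l<n" for k l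
    by (rule Bochner_Integration.integrable_sum) (use I1 that in auto)
  have I3: "integrable M (\<lambda>\<omega>. \<Sum>k<n. \<Sum>j<n. \<Sum>i<n. c i j k l * F i j k l \<omega>)" if "l<n" for l
    by (rule Bochner_Integration.integrable_sum) (use I2 that in auto)
  have "expectation (\<lambda>\<omega>. \<Sum>l<n. \<Sum>k<n. \<Sum>j<n. \<Sum>i<n. c i j k l * F i j k l \<omega>)
     = (\<Sum>l<n. expectation (\<lambda>\<omega>. \<Sum>k<n. \<Sum>j<n. \<Sum>i<n. c i j k l * F i j k l \<omega>))"
    by (rule E_sum) (rule I3)
  also have "\<dots> = (\<Sum>l<n. \<Sum>k<n. expectation (\<lambda>\<omega>. \<Sum>j<n. \<Sum>i<n. c i j k l * F i j k l \<omega>))"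
    by (rule sum.cong[OF refl], rule E_sum, rule I2) auto
  also have "\<dots> = (\<Sum>l<n. \<Sum>k<n. \<Sum>j<n. expectation (\<lambda>\<omega>. \<Sum>i<n. c i j k l * F i j k l \<omega>))"
    by (rule sum.cong[OF refl], rule sum.cong[OF refl], rule E_sum, rule I1) auto
  also have "\<dots> = (\<Sum>l<n. \<Sum>k<n. \<Sum>j<n. \<Sum>i<n. c i j k l * expectation (F i j k l))"
    by (rule sum.cong[OF refl], rule sum.cong[OF refl], rule sum.cong[OF refl], subst E_sum)
       (use assms in auto)
  finally show ?thesis .
qed

lemma E_sum2:
  fixes F :: "nat \<Rightarrow> nat \<Rightarrow> 'a \<Rightarrow> real"
  assumes "\<And>i j. i<n \<Longrightarrow> j<n \<Longrightarrow> integrable M (F i j)"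
  shows "expectation (\<lambda>\<omega>. \<Sum>i<n. \<Sum>j<n. c i j * F i j \<omega>) = (\<Sum>i<n. \<Sum>j<n. c i j * expectation (F i j))"
proof -
  have I1: "integrable M (\<lambda>\<omega>. \<Sum>j<n. c i j * F i j \<omega>)" if "i<n" for i
    using assms that by (intro Bochner_Integration.integrable_sum integrable_mult_right) auto
  have "expectation (\<lambda>\<omega>. \<Sum>i<n. \<Sum>j<n. c i j * F i j \<omega>) = (\<Sum>i<n. expectation (\<lambda>\<omega>. \<Sum>j<n. c i j * F i j \<omega>))"
    by (rule E_sum) (rule I1)
  also have "\<dots> = (\<Sum>i<n. \<Sum>j<n. c i j * expectation (F i j))"
    by (rule sum.cong[OF refl], subst E_sum) (use assms in auto)
  finally show ?thesis .
qed

lemma fourth_moment_bound: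
  fixes e :: "nat \<Rightarrow> 'a \<Rightarrow> real" and w :: "nat \<Rightarrow> real"
  assumes meas: "\<And>i. i < p \<Longrightarrow> e i \<in> borel_measurable M"
    and fb: "fourth_bounded M p e \<phi>" and phi: "0 \<le> \<phi>"
    and odd: "\<And>x j k l. x < p \<Longrightarrow> j < p \<Longrightarrow> k < p \<Longrightarrow> l < p \<Longrightarrow> x \<noteq> j \<Longrightarrow> x \<noteq> k \<Longrightarrow> x \<noteq> l \<Longrightarrow>
        expectation (\<lambda>\<omega>. e x \<omega> * e j \<omega> * e k \<omega> * e l \<omega>) = 0"
    and cov: "\<And>i j. i < p \<Longrightarrow> j < p \<Longrightarrow> expectation (\<lambda>\<omega>. e i \<omega> * e j \<omega>) = (if i = j then 1 else 0)"
  shows "integrable M (\<lambda>\<omega>. (\<Sum>m<p. w m * e m \<omega>)^4)"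
    and "expectation (\<lambda>\<omega>. (\<Sum>m<p. w m * e m \<omega>)^4) \<le> 3 * \<phi> * (expectation (\<lambda>\<omega>. (\<Sum>m<p. w m * e m \<omega>)\<^sup>2))\<^sup>2"
proof -
  have i22: "integrable M (\<lambda>\<omega>. (e i \<omega>)\<^sup>2 * (e j \<omega>)\<^sup>2)" if "i < p" "j < p" for i j
    using fb that unfolding fourth_bounded_def by blast
  have le22: "expectation (\<lambda>\<omega>. (e i \<omega>)\<^sup>2 * (e j \<omega>)\<^sup>2) \<le> \<phi>" if "i < p" "j < p" for i j
    using fb that unfolding fourth_bounded_def by blast
  have i4: "integrable M (\<lambda>\<omega>. e i \<omega> * e j \<omega> * e k \<omega> * e l \<omega>)" if "i < p" "j < p" "k < p" "l < p" for i j k l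
  proof (rule int_dom[of _ "\<lambda>\<omega>. (e i \<omega>)\<^sup>2 * (e j \<omega>)\<^sup>2 + (e k \<omega>)\<^sup>2 * (e l \<omega>)\<^sup>2"])
    show "integrable M (\<lambda>\<omega>. (e i \<omega>)\<^sup>2 * (e j \<omega>)\<^sup>2 + (e k \<omega>)\<^sup>2 * (e l \<omega>)\<^sup>2)"
      using i22 that by simp
    show "(\<lambda>\<omega>. e i \<omega> * e j \<omega> * e k \<omega> * e l \<omega>) \<in> borel_measurable M" using meas that by simp
    show "\<bar>e i \<omega> * e j \<omega> * e k \<omega> * e l \<omega>\<bar> \<le> (e i \<omega>)\<^sup>2 * (e j \<omega>)\<^sup>2 + (e k \<omega>)\<^sup>2 * (e l \<omega>)\<^sup>2" for \<omega>
      by (rule aux5)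
  qed
  have isq: "integrable M (\<lambda>\<omega>. (e i \<omega>)\<^sup>2)" if "i < p" for i
  proof (rule int_dom[of _ "\<lambda>\<omega>. 1 + (e i \<omega>)\<^sup>2 * (e i \<omega>)\<^sup>2"])
    show "integrable M (\<lambda>\<omega>. 1 + (e i \<omega>)\<^sup>2 * (e i \<omega>)\<^sup>2)" using i22[OF that that] by simp
    show "(\<lambda>\<omega>. (e i \<omega>)\<^sup>2) \<in> borel_measurable M" using meas that by simp
    show "\<bar>(e i \<omega>)\<^sup>2\<bar> \<le> 1 + (e i \<omega>)\<^sup>2 * (e i \<omega>)\<^sup>2" for \<omega> using aux1'[of "e i \<omega>"] by simp
  qed
  have i2: "integrable M (\<lambda>\<omega>. e i \<omega> * e j \<omega>)" if "i < p" "j < p" for i j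
  proof (rule int_dom[of _ "\<lambda>\<omega>. (e i \<omega>)\<^sup>2 + (e j \<omega>)\<^sup>2"])
    show "integrable M (\<lambda>\<omega>. (e i \<omega>)\<^sup>2 + (e j \<omega>)\<^sup>2)" using isq that by simp
    show "(\<lambda>\<omega>. e i \<omega> * e j \<omega>) \<in> borel_measurable M" using meas that by simp
    show "\<bar>e i \<omega> * e j \<omega>\<bar> \<le> (e i \<omega>)\<^sup>2 + (e j \<omega>)\<^sup>2" for \<omega> by (rule aux6)
  qed
  define mm where "mm = (\<lambda>i j k l. expectation (\<lambda>\<omega>. e i \<omega> * e j \<omega> * e k \<omega> * e l \<omega>))"
  have exp4: "(\<Sum>m<p. w m * e m \<omega>)^4 = (\<Sum>l<p. \<Sum>k<p. \<Sum>j<p. \<Sum>i<p.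
      (w i * w j * w k * w l) * (e i \<omega> * e j \<omega> * e k \<omega> * e l \<omega>))" for \<omega>
    using pow4_sum[of "\<lambda>m. w m * e m \<omega>" "{..<p}"] by (simp add: mult_ac)
  show int4: "integrable M (\<lambda>\<omega>. (\<Sum>m<p. w m * e m \<omega>)^4)"
    unfolding exp4 using i4 by (intro Bochner_Integration.integrable_sum integrable_mult_right) auto
  have "expectation (\<lambda>\<omega>. (\<Sum>m<p. w m * e m \<omega>)^4)
      = (\<Sum>l<p. \<Sum>k<p. \<Sum>j<p. \<Sum>i<p. (w i * w j * w k * w l) * mm i j k l)"
    unfolding exp4 mm_def
    by (rule E_sum4[where F="\<lambda>i j k l \<omega>. e i \<omega> * e j \<omega> * e k \<omega> * e l \<omega>"]) (rule i4)
  also have "\<dots> \<le> (\<Sum>l<p. \<Sum>k<p. \<Sum>j<p. \<Sum>i<p. \<phi> *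
      ((if i = j then (if k = l then (w j)\<^sup>2 * (w l)\<^sup>2 else 0) else 0)
     + (if i = k then (if j = l then (w k)\<^sup>2 * (w l)\<^sup>2 else 0) else 0)
     + (if i = l then (if j = k then (w l)\<^sup>2 * (w k)\<^sup>2 else 0) else 0)))"
  proof (intro sum_mono)
    fix i j k l assume "i \<in> {..<p}" "j \<in> {..<p}" "k \<in> {..<p}" "l \<in> {..<p}"
    then have ijkl: "i < p" "j < p" "k < p" "l < p" by auto
    define B1 where "B1 = (if i = j then (if k = l then (w j)\<^sup>2 * (w l)\<^sup>2 else 0) else (0::real))"
    define B2 where "B2 = (if i = k then (if j = l then (w k)\<^sup>2 * (w l)\<^sup>2 else 0) else (0::real))"
    define B3 where "B3 = (if i = l then (if j = k then (w l)\<^sup>2 * (w k)\<^sup>2 else 0) else (0::real))"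
    have B0: "0 \<le> B1" "0 \<le> B2" "0 \<le> B3" unfolding B1_def B2_def B3_def by auto
    have "(w i * w j * w k * w l) * mm i j k l \<le> \<phi> * (B1 + B2 + B3)"
    proof (cases "i = j \<and> k = l")
      case True
      then have "(w i * w j * w k * w l) * mm i j k l = ((w j)\<^sup>2 * (w l)\<^sup>2) * expectation (\<lambda>\<omega>. (e j \<omega>)\<^sup>2 * (e l \<omega>)\<^sup>2)"
        unfolding mm_def by (simp add: power2_eq_square mult_ac)
      also have "\<dots> \<le> \<phi> * (B1 + B2 + B3)"
        using term_bound[OF _ le22[OF ijkl(2,4)] B0(2,3) phi] True unfolding B1_def by simp
      finally show ?thesis .
    next
      case F1: False
      show ?thesis
      proof (cases "i = k \<and> j = l")
        case True
        then have "(w i * w j * w k * w l) * mm i j k l = ((w k)\<^sup>2 * (w l)\<^sup>2) * expectation (\<lambda>\<omega>. (e k \<omega>)\<^sup>2 * (e l \<omega>)\<^sup>2)"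
          unfolding mm_def by (simp add: power2_eq_square mult_ac)
        also have "\<dots> \<le> \<phi> * (B2 + B1 + B3)"
          using term_bound[OF _ le22[OF ijkl(3,4)] B0(1,3) phi] True unfolding B2_def by simp
        finally show ?thesis by (simp add: add_ac)
      next
        case F2: False
        show ?thesis
        proof (cases "i = l \<and> j = k")
          case True
          then have "(w i * w j * w k * w l) * mm i j k l = ((w l)\<^sup>2 * (w k)\<^sup>2) * expectation (\<lambda>\<omega>. (e l \<omega>)\<^sup>2 * (e k \<omega>)\<^sup>2)"
            unfolding mm_def by (simp add: power2_eq_square mult_ac)
          also have "\<dots> \<le> \<phi> * (B3 + B1 + B2)"
            using term_bound[OF _ le22[OF ijkl(4,3)] B0(1,2) phi] True unfolding B3_def by simp
          finally show ?thesis by (simp add: add_ac)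
        next
          case F3: False
          have "mm i j k l = 0"
            using unique_idx[OF F1 F2 F3]
          proof (elim disjE conjE)
            assume "i \<noteq> j" "i \<noteq> k" "i \<noteq> l"
            then show ?thesis unfolding mm_def using odd[of i j k l] ijkl by simp
          next
            assume "j \<noteq> i" "j \<noteq> k" "j \<noteq> l"
            then have "expectation (\<lambda>\<omega>. e j \<omega> * e i \<omega> * e k \<omega> * e l \<omega>) = 0" using odd[of j i k l] ijkl by simp
            then show ?thesis unfolding mm_def by (simp add: mult_ac)
          next
            assume "k \<noteq> i" "k \<noteq> j" "k \<noteq> l"
            then have "expectation (\<lambda>\<omega>. e k \<omega> * e i \<omega> * e j \<omega> * e l \<omega>) = 0" using odd[of k i j l] ijkl by simp
            then show ?thesis unfolding mm_def by (simp add: mult_ac)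
          next
            assume "l \<noteq> i" "l \<noteq> j" "l \<noteq> k"
            then have "expectation (\<lambda>\<omega>. e l \<omega> * e i \<omega> * e j \<omega> * e k \<omega>) = 0" using odd[of l i j k] ijkl by simp
            then show ?thesis unfolding mm_def by (simp add: mult_ac)
          qed
          then show ?thesis using B0 phi by simp
        qed
      qed
    qed
    then show "(w i * w j * w k * w l) * mm i j k l \<le> \<phi> *
      ((if i = j then (if k = l then (w j)\<^sup>2 * (w l)\<^sup>2 else 0) else 0)
     + (if i = k then (if j = l then (w k)\<^sup>2 * (w l)\<^sup>2 else 0) else 0)
     + (if i = l then (if j = k then (w l)\<^sup>2 * (w k)\<^sup>2 else 0) else 0))"
      unfolding B1_def B2_def B3_def .
  qed
  also have "\<dots> = \<phi> * (
      (\<Sum>l<p. \<Sum>k<p. \<Sum>j<p. \<Sum>i<p. (if i = j then (if k = l then (w j)\<^sup>2 * (w l)\<^sup>2 else 0) else 0))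
    + (\<Sum>l<p. \<Sum>k<p. \<Sum>j<p. \<Sum>i<p. (if i = k then (if j = l then (w k)\<^sup>2 * (w l)\<^sup>2 else 0) else 0))
    + (\<Sum>l<p. \<Sum>k<p. \<Sum>j<p. \<Sum>i<p. (if i = l then (if j = k then (w l)\<^sup>2 * (w k)\<^sup>2 else 0) else 0)))"
    by (simp only: sum_distrib_left[symmetric] sum.distrib)
  also have "\<dots> = 3 * \<phi> * (\<Sum>i<p. (w i)\<^sup>2)\<^sup>2"
  proof -
    have b1: "(\<Sum>l<p. \<Sum>k<p. \<Sum>j<p. \<Sum>i<p. (if i = j then (if k = l then (w j)\<^sup>2 * (w l)\<^sup>2 else 0) else 0)) = (\<Sum>i<p. (w i)\<^sup>2)\<^sup>2"
      using B1[where f="\<lambda>j l. (w j)\<^sup>2 * (w l)\<^sup>2" and p=p] sqsum[where p=p and w=w] by simp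
    have b2: "(\<Sum>l<p. \<Sum>k<p. \<Sum>j<p. \<Sum>i<p. (if i = k then (if j = l then (w k)\<^sup>2 * (w l)\<^sup>2 else 0) else 0)) = (\<Sum>i<p. (w i)\<^sup>2)\<^sup>2"
      using B2[where f="\<lambda>k l. (w k)\<^sup>2 * (w l)\<^sup>2" and p=p] sqsum[where p=p and w=w] by simp
    have s2: "(\<Sum>l<p. \<Sum>k<p. (w l)\<^sup>2 * (w k)\<^sup>2) = (\<Sum>i<p. (w i)\<^sup>2)\<^sup>2"
      by (subst sum.swap) (rule sqsum)
    have b3: "(\<Sum>l<p. \<Sum>k<p. \<Sum>j<p. \<Sum>i<p. (if i = l then (if j = k then (w l)\<^sup>2 * (w k)\<^sup>2 else 0) else 0)) = (\<Sum>i<p. (w i)\<^sup>2)\<^sup>2"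
      using B3[where f="\<lambda>l k. (w l)\<^sup>2 * (w k)\<^sup>2" and p=p] s2 by simp
    show ?thesis unfolding b1 b2 b3 by simp
  qed
  also have "(\<Sum>i<p. (w i)\<^sup>2) = expectation (\<lambda>\<omega>. (\<Sum>m<p. w m * e m \<omega>)\<^sup>2)"
  proof -
    have sq: "(\<Sum>m<p. w m * e m \<omega>)\<^sup>2 = (\<Sum>i<p. \<Sum>j<p. (w i * w j) * (e i \<omega> * e j \<omega>))" for \<omega>
      by (simp add: power2_eq_square sum_product mult_ac)
    have "expectation (\<lambda>\<omega>. (\<Sum>m<p. w m * e m \<omega>)\<^sup>2) = (\<Sum>i<p. \<Sum>j<p. (w i * w j) * expectation (\<lambda>\<omega>. e i \<omega> * e j \<omega>))"
      unfolding sq by (rule E_sum2[where F="\<lambda>i j \<omega>. e i \<omega> * e j \<omega>"]) (rule i2)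
    also have "\<dots> = (\<Sum>i<p. \<Sum>j<p. if i = j then (w i)\<^sup>2 else 0)"
      using cov by (intro sum.cong refl) (simp add: power2_eq_square)
    also have "\<dots> = (\<Sum>i<p. (w i)\<^sup>2)" by (rule sum.cong[OF refl]) simp
    finally show ?thesis by simp
  qed
  finally show "expectation (\<lambda>\<omega>. (\<Sum>m<p. w m * e m \<omega>)^4) \<le> 3 * \<phi> * (expectation (\<lambda>\<omega>. (\<Sum>m<p. w m * e m \<omega>)\<^sup>2))\<^sup>2" .
qed

end



lemma lin_meas:
  fixes x :: "nat \<Rightarrow> 'a \<Rightarrow> real"
  assumes "\<And>i. i < n \<Longrightarrow> x i \<in> borel_measurable M"
  shows "(\<lambda>\<omega>. \<Sum>i<n. A i * x i \<omega>) \<in> borel_measurable M"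
  using assms by (intro borel_measurable_sum borel_measurable_times) auto

context prob_space begin

lemma prod_int2:
  fixes X Y :: "'a \<Rightarrow> real"
  assumes "X \<in> borel_measurable M" "Y \<in> borel_measurable M"
    "integrable M (\<lambda>\<omega>. (X \<omega>)\<^sup>2)" "integrable M (\<lambda>\<omega>. (Y \<omega>)\<^sup>2)"
  shows "integrable M (\<lambda>\<omega>. X \<omega> * Y \<omega>)"
proof (rule int_dom[of _ "\<lambda>\<omega>. (X \<omega>)\<^sup>2 + (Y \<omega>)\<^sup>2"])
  show "integrable M (\<lambda>\<omega>. (X \<omega>)\<^sup>2 + (Y \<omega>)\<^sup>2)" using assms by simp
  show "(\<lambda>\<omega>. X \<omega> * Y \<omega>) \<in> borel_measurable M" using assms by simp
  show "\<bar>X \<omega> * Y \<omega>\<bar> \<le> (X \<omega>)\<^sup>2 + (Y \<omega>)\<^sup>2" for \<omega> by (rule aux6)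
qed

lemma lin_cov:
  fixes x :: "nat \<Rightarrow> 'a \<Rightarrow> real"
  assumes meas: "\<And>i. i < n \<Longrightarrow> x i \<in> borel_measurable M"
    and sq: "\<And>i. i < n \<Longrightarrow> integrable M (\<lambda>\<omega>. (x i \<omega>)\<^sup>2)"
  shows "expectation (\<lambda>\<omega>. (\<Sum>a<n. A a * x a \<omega>) * (\<Sum>b<n. B b * x b \<omega>))
       = (\<Sum>a<n. \<Sum>b<n. (A a * B b) * expectation (\<lambda>\<omega>. x a \<omega> * x b \<omega>))"
proof -
  have "(\<lambda>\<omega>. (\<Sum>a<n. A a * x a \<omega>) * (\<Sum>b<n. B b * x b \<omega>))
      = (\<lambda>\<omega>. \<Sum>a<n. \<Sum>b<n. (A a * B b) * (x a \<omega> * x b \<omega>))"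
    by (simp add: sum_product mult_ac)
  then show ?thesis
    using E_sum2[where F="\<lambda>a b \<omega>. x a \<omega> * x b \<omega>" and n=n and c="\<lambda>a b. A a * B b"]
      prod_int2[OF meas meas sq sq] by simp
qed

lemma lin_mean:
  fixes x :: "nat \<Rightarrow> 'a \<Rightarrow> real"
  assumes "\<And>i. i < n \<Longrightarrow> integrable M (x i) \<and> expectation (x i) = 0"
  shows "integrable M (\<lambda>\<omega>. \<Sum>i<n. A i * x i \<omega>)" "expectation (\<lambda>\<omega>. \<Sum>i<n. A i * x i \<omega>) = 0"
proof -
  show "integrable M (\<lambda>\<omega>. \<Sum>i<n. A i * x i \<omega>)"
    using assms by (intro Bochner_Integration.integrable_sum integrable_mult_right) auto
  have "expectation (\<lambda>\<omega>. \<Sum>i<n. A i * x i \<omega>) = (\<Sum>i<n. expectation (\<lambda>\<omega>. A i * x i \<omega>))"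
    by (rule E_sum) (use assms in auto)
  also have "\<dots> = 0" using assms by simp
  finally show "expectation (\<lambda>\<omega>. \<Sum>i<n. A i * x i \<omega>) = 0" .
qed

end

lemma W2_core:
  fixes M :: "nat \<Rightarrow> 'a measure" and Q :: "nat \<Rightarrow> 'a \<Rightarrow> real" and Y :: "nat \<Rightarrow> nat \<Rightarrow> 'a \<Rightarrow> real"
  assumes prob: "\<And>p. prob_space (M p)"
    and C: "0 \<le> C"
    and ev: "\<forall>\<^sub>F p in sequentially. Q p = (\<lambda>\<omega>. \<Sum>k<p. (Y p k \<omega>)\<^sup>2) \<and>
       (\<forall>k<p. Y p k \<in> borel_measurable (M p) \<and> integrable (M p) (\<lambda>\<omega>. (Y p k \<omega>)^4) \<and>
          integral\<^sup>L (M p) (\<lambda>\<omega>. (Y p k \<omega>)^4) \<le> C * (integral\<^sup>L (M p) (\<lambda>\<omega>. (Y p k \<omega>)\<^sup>2))\<^sup>2)"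
    and w1: "(\<lambda>p. integral\<^sup>L (M p) (Q p)) \<in> O(\<lambda>p. real p)"
  shows "W2 M Q"
proof -
  have step: "integrable (M p) (Q p) \<and> integrable (M p) (\<lambda>\<omega>. (Q p \<omega>)\<^sup>2) \<and>
      integral\<^sup>L (M p) (\<lambda>\<omega>. (Q p \<omega>)\<^sup>2) \<le> C * (integral\<^sup>L (M p) (Q p))\<^sup>2"
    if H: "Q p = (\<lambda>\<omega>. \<Sum>k<p. (Y p k \<omega>)\<^sup>2) \<and>
       (\<forall>k<p. Y p k \<in> borel_measurable (M p) \<and> integrable (M p) (\<lambda>\<omega>. (Y p k \<omega>)^4) \<and>
          integral\<^sup>L (M p) (\<lambda>\<omega>. (Y p k \<omega>)^4) \<le> C * (integral\<^sup>L (M p) (\<lambda>\<omega>. (Y p k \<omega>)\<^sup>2))\<^sup>2)" for p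
  proof -
    have Qp: "Q p = (\<lambda>\<omega>. \<Sum>k<p. (Y p k \<omega>)\<^sup>2)" using H by (rule conjunct1)
    have all: "\<forall>k<p. Y p k \<in> borel_measurable (M p) \<and> integrable (M p) (\<lambda>\<omega>. (Y p k \<omega>)^4) \<and>
          integral\<^sup>L (M p) (\<lambda>\<omega>. (Y p k \<omega>)^4) \<le> C * (integral\<^sup>L (M p) (\<lambda>\<omega>. (Y p k \<omega>)\<^sup>2))\<^sup>2"
      using H by (rule conjunct2)
    have a1: "\<And>k. k < p \<Longrightarrow> Y p k \<in> borel_measurable (M p)" using all by simp
    have a2: "\<And>k. k < p \<Longrightarrow> integrable (M p) (\<lambda>\<omega>. (Y p k \<omega>)^4)" using all by simp
    have a3: "\<And>k. k < p \<Longrightarrow> integral\<^sup>L (M p) (\<lambda>\<omega>. (Y p k \<omega>)^4) \<le> C * (integral\<^sup>L (M p) (\<lambda>\<omega>. (Y p k \<omega>)\<^sup>2))\<^sup>2"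
      using all by simp
    note cr = prob_space.core[OF prob a1 a2 a3 C]
    show ?thesis unfolding Qp using cr(1) cr(2) cr(3) by (intro conjI)
  qed
  have ev2: "\<forall>\<^sub>F p in sequentially. integrable (M p) (Q p) \<and> integrable (M p) (\<lambda>\<omega>. (Q p \<omega>)\<^sup>2) \<and>
      integral\<^sup>L (M p) (\<lambda>\<omega>. (Q p \<omega>)\<^sup>2) \<le> C * (integral\<^sup>L (M p) (Q p))\<^sup>2"
    using ev by (rule eventually_mono) (rule step)
  obtain c where c: "c > 0" "\<forall>\<^sub>F p in sequentially. norm (integral\<^sup>L (M p) (Q p)) \<le> c * norm (real p)"
    using landau_o.bigE[OF w1] by blast
  have vb: "norm (integral\<^sup>L (M p) (\<lambda>\<omega>. (Q p \<omega> - integral\<^sup>L (M p) (Q p))\<^sup>2)) \<le> C * c\<^sup>2 * norm ((real p)\<^sup>2)"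
    if H1: "integrable (M p) (Q p) \<and> integrable (M p) (\<lambda>\<omega>. (Q p \<omega>)\<^sup>2) \<and>
      integral\<^sup>L (M p) (\<lambda>\<omega>. (Q p \<omega>)\<^sup>2) \<le> C * (integral\<^sup>L (M p) (Q p))\<^sup>2"
    and H2: "norm (integral\<^sup>L (M p) (Q p)) \<le> c * norm (real p)" for p
  proof -
    define m where "m = integral\<^sup>L (M p) (Q p)"
    have i1: "integrable (M p) (Q p)" and i2: "integrable (M p) (\<lambda>\<omega>. (Q p \<omega>)\<^sup>2)"
      and b: "integral\<^sup>L (M p) (\<lambda>\<omega>. (Q p \<omega>)\<^sup>2) \<le> C * m\<^sup>2"
      using H1 unfolding m_def by auto
    have v0: "0 \<le> integral\<^sup>L (M p) (\<lambda>\<omega>. (Q p \<omega> - m)\<^sup>2)"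
      by (intro integral_nonneg_AE AE_I2) simp
    have "integral\<^sup>L (M p) (\<lambda>\<omega>. (Q p \<omega> - m)\<^sup>2) \<le> integral\<^sup>L (M p) (\<lambda>\<omega>. (Q p \<omega>)\<^sup>2)"
      unfolding m_def by (rule prob_space.var_le[OF prob i1 i2])
    also have "\<dots> \<le> C * m\<^sup>2" by (rule b)
    also have "C * m\<^sup>2 \<le> C * (c * real p)\<^sup>2"
    proof -
      have "\<bar>m\<bar> \<le> c * real p" using H2 unfolding m_def by simp
      then have "\<bar>m\<bar>\<^sup>2 \<le> (c * real p)\<^sup>2" by (intro power_mono) auto
      then have "m\<^sup>2 \<le> (c * real p)\<^sup>2" by simp
      then show ?thesis using C by (rule mult_left_mono)
    qed
    also have "\<dots> = C * c\<^sup>2 * (real p)\<^sup>2" by (simp add: power_mult_distrib)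
    finally have "integral\<^sup>L (M p) (\<lambda>\<omega>. (Q p \<omega> - m)\<^sup>2) \<le> C * c\<^sup>2 * (real p)\<^sup>2" .
    then show ?thesis using v0 unfolding m_def by simp
  qed
  show ?thesis
    unfolding W2_def
  proof
    show "\<forall>\<^sub>F p in sequentially. integrable (M p) (\<lambda>\<omega>. (Q p \<omega>)\<^sup>2)"
      using ev2 by (rule eventually_mono) simp
    show "(\<lambda>p. integral\<^sup>L (M p) (\<lambda>\<omega>. (Q p \<omega> - integral\<^sup>L (M p) (Q p))\<^sup>2)) \<in> O(\<lambda>p. (real p)\<^sup>2)"
    proof (rule bigoI[where c="C * c\<^sup>2"])
      show "\<forall>\<^sub>F p in sequentially. norm (integral\<^sup>L (M p) (\<lambda>\<omega>. (Q p \<omega> - integral\<^sup>L (M p) (Q p))\<^sup>2))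
               \<le> C * c\<^sup>2 * norm ((real p)\<^sup>2)"
        using eventually_conj[OF ev2 c(2)] by (rule eventually_mono) (rule vb, blast, blast)
    qed
  qed
qed



lemma fb_mono: "fourth_bounded M p e \<phi> \<Longrightarrow> \<phi> \<le> \<psi> \<Longrightarrow> fourth_bounded M p e \<psi>"
  unfolding fourth_bounded_def by force

lemma pow4_sq: "(x::real)^4 = x\<^sup>2 * x\<^sup>2"
  by (simp add: power2_eq_square power4_eq_xxxx)

context prob_space begin

lemma fb_int4:
  assumes "fourth_bounded M p e \<phi>" "i < p"
  shows "integrable M (\<lambda>\<omega>. (e i \<omega>)^4)" "expectation (\<lambda>\<omega>. (e i \<omega>)^4) \<le> \<phi>"
  using assms unfolding fourth_bounded_def pow4_sq by blast+

lemma fb_sq: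
  assumes "fourth_bounded M p e \<phi>" "i < p" "e i \<in> borel_measurable M"
  shows "integrable M (\<lambda>\<omega>. (e i \<omega>)\<^sup>2)"
  by (rule sq_from_4[OF assms(3) fb_int4(1)[OF assms(1,2)]])

lemma fb_int3:
  assumes fb: "fourth_bounded M p e \<phi>" and m: "\<And>i. i < p \<Longrightarrow> e i \<in> borel_measurable M"
    and idx: "j < p" "k < p" "l < p"
  shows "integrable M (\<lambda>\<omega>. e j \<omega> * e k \<omega> * e l \<omega>)"
proof (rule int_dom[of _ "\<lambda>\<omega>. (e j \<omega>)\<^sup>2 * (e k \<omega>)\<^sup>2 + (e l \<omega>)\<^sup>2"])
  have "integrable M (\<lambda>\<omega>. (e j \<omega>)\<^sup>2 * (e k \<omega>)\<^sup>2)" using fb idx unfolding fourth_bounded_def by blast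
  moreover have "integrable M (\<lambda>\<omega>. (e l \<omega>)\<^sup>2)" by (rule fb_sq[OF fb idx(3) m[OF idx(3)]])
  ultimately show "integrable M (\<lambda>\<omega>. (e j \<omega>)\<^sup>2 * (e k \<omega>)\<^sup>2 + (e l \<omega>)\<^sup>2)" by simp
  show "(\<lambda>\<omega>. e j \<omega> * e k \<omega> * e l \<omega>) \<in> borel_measurable M" using m idx by simp
  show "\<bar>e j \<omega> * e k \<omega> * e l \<omega>\<bar> \<le> (e j \<omega>)\<^sup>2 * (e k \<omega>)\<^sup>2 + (e l \<omega>)\<^sup>2" for \<omega> by (rule aux7)
qed

end

theorem lemma2:
  fixes M :: "nat \<Rightarrow> 'a measure" and eps :: "nat \<Rightarrow> nat \<Rightarrow> 'a \<Rightarrow> real"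
    and Delta W S :: "nat \<Rightarrow> nat \<Rightarrow> nat \<Rightarrow> real"
  assumes prob: "\<And>p. prob_space (M p)"
    and meas: "\<And>p i. i < p \<Longrightarrow> eps p i \<in> borel_measurable (M p)"
    and sq_int: "\<And>p i. i < p \<Longrightarrow> integrable (M p) (\<lambda>\<omega>. (eps p i \<omega>)\<^sup>2)"
    and mean0: "\<And>p i. i < p \<Longrightarrow> integrable (M p) (eps p i) \<and> integral\<^sup>L (M p) (eps p i) = 0"
    and cov: "\<And>p i j. i < p \<Longrightarrow> j < p \<Longrightarrow>
                Delta p i j = integral\<^sup>L (M p) (\<lambda>\<omega>. eps p i \<omega> * eps p j \<omega>)"
    and Delta_pd: "\<And>p. pd_mat p (Delta p)"
    and W_psd: "\<And>p. psd_mat p (W p)"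
    and S_def: "\<And>p. is_inv_sqrt p (Delta p) (S p)"
  shows
    "((\<forall>p. mvnormal (M p) p (eps p) (Delta p)) \<longrightarrow>
        W1 M (\<lambda>p. qrv p (W p) (eps p)) \<longrightarrow> W2 M (\<lambda>p. qrv p (W p) (eps p))) \<and>
     ((\<forall>p. is_inverse_mat p (W p) (Delta p)) \<longrightarrow>
        (\<exists>phi. \<forall>\<^sub>F p in sequentially. fourth_bounded (M p) p (stdz p (S p) (eps p)) phi) \<longrightarrow>
        W2 M (\<lambda>p. qrv p (W p) (eps p))) \<and>
     ((\<forall>p. sign_symmetric (M p) p (stdz p (S p) (eps p)) \<or>
           prob_space.indep_vars (M p) (\<lambda>_. borel) (stdz p (S p) (eps p)) {..<p}) \<longrightarrow>
        (\<exists>phi. \<forall>\<^sub>F p in sequentially. fourth_bounded (M p) p (stdz p (S p) (eps p)) phi) \<longrightarrow>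
        W1 M (\<lambda>p. qrv p (W p) (eps p)) \<longrightarrow> W2 M (\<lambda>p. qrv p (W p) (eps p)))"
proof -
  define Q where "Q = (\<lambda>p. qrv p (W p) (eps p))"
  define e where "e = (\<lambda>p. stdz p (S p) (eps p))"
  have e_eq: "\<And>p. stdz p (S p) (eps p) = e p" unfolding e_def by simp
  have e_app: "\<And>(p::nat) k \<omega>. e p k \<omega> = (\<Sum>i<p. S p k i * eps p i \<omega>)" unfolding e_def stdz_def by simp
  have emeas: "\<And>p i. i < p \<Longrightarrow> e p i \<in> borel_measurable (M p)"
  proof -
    fix p i :: nat assume "i < p"
    have "(\<lambda>\<omega>. \<Sum>k<p. S p i k * eps p k \<omega>) \<in> borel_measurable (M p)"
      by (rule lin_meas) (rule meas)
    then show "e p i \<in> borel_measurable (M p)" unfolding e_def stdz_def by simp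
  qed
  have ecov: "\<And>p i j. i < p \<Longrightarrow> j < p \<Longrightarrow> integral\<^sup>L (M p) (\<lambda>\<omega>. e p i \<omega> * e p j \<omega>) = (if i = j then 1 else 0)"
  proof -
    fix p i j :: nat assume ij: "i < p" "j < p"
    have "integral\<^sup>L (M p) (\<lambda>\<omega>. e p i \<omega> * e p j \<omega>)
        = integral\<^sup>L (M p) (\<lambda>\<omega>. (\<Sum>a<p. S p i a * eps p a \<omega>) * (\<Sum>b<p. S p j b * eps p b \<omega>))"
      unfolding e_app ..
    also have "\<dots> = (\<Sum>a<p. \<Sum>b<p. (S p i a * S p j b) * integral\<^sup>L (M p) (\<lambda>\<omega>. eps p a \<omega> * eps p b \<omega>))"
      by (rule prob_space.lin_cov[OF prob]) (auto intro: meas sq_int)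
    also have "\<dots> = (\<Sum>a<p. \<Sum>b<p. S p i a * S p j b * Delta p a b)"
      using cov by (intro sum.cong refl) simp
    also have "\<dots> = (if i = j then 1 else 0)" by (rule cov_e[OF S_def ij])
    finally show "integral\<^sup>L (M p) (\<lambda>\<omega>. e p i \<omega> * e p j \<omega>) = (if i = j then 1 else 0)" .
  qed
  have emean: "\<And>p i. i < p \<Longrightarrow> integrable (M p) (e p i) \<and> integral\<^sup>L (M p) (e p i) = 0"
  proof -
    fix p i :: nat assume "i < p"
    have "integrable (M p) (\<lambda>\<omega>. \<Sum>k<p. S p i k * eps p k \<omega>)" "integral\<^sup>L (M p) (\<lambda>\<omega>. \<Sum>k<p. S p i k * eps p k \<omega>) = 0"
      by (rule prob_space.lin_mean[OF prob], rule mean0, assumption)+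
    then show "integrable (M p) (e p i) \<and> integral\<^sup>L (M p) (e p i) = 0" unfolding e_def stdz_def by simp
  qed
  have "\<forall>p. \<exists>u. \<forall>i<p. \<forall>j<p. W p i j = (\<Sum>k<p. u k i * u k j)"
    using gram_decomp[OF W_psd] by blast
  then obtain U where U: "\<forall>p. \<forall>i<p. \<forall>j<p. W p i j = (\<Sum>k<p. U p k i * U p k j)" by metis
  define Y where "Y = (\<lambda>p k \<omega>. \<Sum>i<p. U p k i * eps p i \<omega>)"
  have QY: "\<And>p. Q p = (\<lambda>\<omega>. \<Sum>k<p. (Y p k \<omega>)\<^sup>2)"
    unfolding Q_def qrv_def Y_def by (rule ext, rule qform_gram) (use U in auto)
  have Ym: "\<And>p k. Y p k \<in> borel_measurable (M p)"
    unfolding Y_def by (rule lin_meas) (rule meas)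
  have part1: "(\<forall>p. mvnormal (M p) p (eps p) (Delta p)) \<longrightarrow> W1 M Q \<longrightarrow> W2 M Q"
  proof (intro impI)
    assume mvn: "\<forall>p. mvnormal (M p) p (eps p) (Delta p)" and w1: "W1 M Q"
    have kb: "integrable (M p) (\<lambda>\<omega>. (Y p k \<omega>)^4) \<and>
        integral\<^sup>L (M p) (\<lambda>\<omega>. (Y p k \<omega>)^4) \<le> 3 * (integral\<^sup>L (M p) (\<lambda>\<omega>. (Y p k \<omega>)\<^sup>2))\<^sup>2" for p k :: nat
    proof -
      interpret P: prob_space "M p" by (rule prob)
      have mv: "mvnormal (M p) p (eps p) (Delta p)" using mvn by blast
      define q where "q = qform p (Delta p) (U p k)"
      have mv': "if q > 0 then distributed (M p) lborel (Y p k) (\<lambda>x. ennreal (normal_density 0 (sqrt q) x))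
          else (AE \<omega> in M p. Y p k \<omega> = 0)"
        using mv unfolding mvnormal_def q_def Y_def by blast
      show ?thesis
      proof (cases "q > 0")
        case True
        then have D: "distributed (M p) lborel (Y p k) (\<lambda>x. ennreal (normal_density 0 (sqrt q) x))"
          using mv' by simp
        have sq: "0 < sqrt q" using True by simp
        show ?thesis using P.normal_4[OF sq D] by simp
      next
        case False
        then have ae: "AE \<omega> in M p. Y p k \<omega> = 0" using mv' by simp
        show ?thesis using P.zero_4[OF ae Ym] by simp
      qed
    qed
    show "W2 M Q"
    proof (rule W2_core[OF prob, of 3 Q Y])
      show "0 \<le> (3::real)" by simp
      show "(\<lambda>p. integral\<^sup>L (M p) (Q p)) \<in> O(\<lambda>p. real p)" using w1 unfolding W1_def .
      show "\<forall>\<^sub>F p in sequentially. Q p = (\<lambda>\<omega>. \<Sum>k<p. (Y p k \<omega>)\<^sup>2) \<and>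
       (\<forall>k<p. Y p k \<in> borel_measurable (M p) \<and> integrable (M p) (\<lambda>\<omega>. (Y p k \<omega>)^4) \<and>
          integral\<^sup>L (M p) (\<lambda>\<omega>. (Y p k \<omega>)^4) \<le> 3 * (integral\<^sup>L (M p) (\<lambda>\<omega>. (Y p k \<omega>)\<^sup>2))\<^sup>2)"
        by (intro always_eventually allI conjI impI QY Ym) (use kb in auto)
    qed
  qed
  have part2: "(\<forall>p. is_inverse_mat p (W p) (Delta p)) \<longrightarrow>
      (\<exists>phi. \<forall>\<^sub>F p in sequentially. fourth_bounded (M p) p (e p) phi) \<longrightarrow> W2 M Q"
  proof (intro impI)
    assume inv: "\<forall>p. is_inverse_mat p (W p) (Delta p)"
      and "\<exists>phi. \<forall>\<^sub>F p in sequentially. fourth_bounded (M p) p (e p) phi"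
    then obtain \<phi> where fbev: "\<forall>\<^sub>F p in sequentially. fourth_bounded (M p) p (e p) \<phi>" by blast
    define C where "C = max \<phi> 0"
    have C0: "0 \<le> C" unfolding C_def by simp
    have step: "(Q p = (\<lambda>\<omega>. \<Sum>k<p. (e p k \<omega>)\<^sup>2) \<and>
       (\<forall>k<p. e p k \<in> borel_measurable (M p) \<and> integrable (M p) (\<lambda>\<omega>. (e p k \<omega>)^4) \<and>
          integral\<^sup>L (M p) (\<lambda>\<omega>. (e p k \<omega>)^4) \<le> C * (integral\<^sup>L (M p) (\<lambda>\<omega>. (e p k \<omega>)\<^sup>2))\<^sup>2))
       \<and> norm (integral\<^sup>L (M p) (Q p)) \<le> 1 * norm (real p)"
      if fb: "fourth_bounded (M p) p (e p) \<phi>" for p :: nat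
    proof -
      interpret P: prob_space "M p" by (rule prob)
      have Wp: "\<And>i j. i < p \<Longrightarrow> j < p \<Longrightarrow> W p i j = (\<Sum>k<p. S p k i * S p k j)"
        using inverse_W_SS[OF S_def] inv by blast
      have Qe: "Q p = (\<lambda>\<omega>. \<Sum>k<p. (e p k \<omega>)\<^sup>2)"
        unfolding Q_def qrv_def e_app by (rule ext, rule qform_gram) (rule Wp)
      have e2: "integral\<^sup>L (M p) (\<lambda>\<omega>. (e p k \<omega>)\<^sup>2) = 1" if "k < p" for k
        using ecov[OF that that] by (simp add: power2_eq_square)
      have kk: "e p k \<in> borel_measurable (M p) \<and> integrable (M p) (\<lambda>\<omega>. (e p k \<omega>)^4) \<and>
          integral\<^sup>L (M p) (\<lambda>\<omega>. (e p k \<omega>)^4) \<le> C * (integral\<^sup>L (M p) (\<lambda>\<omega>. (e p k \<omega>)\<^sup>2))\<^sup>2" if "k < p" for k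
      proof (intro conjI)
        show "e p k \<in> borel_measurable (M p)" by (rule emeas[OF that])
        show "integrable (M p) (\<lambda>\<omega>. (e p k \<omega>)^4)" by (rule P.fb_int4(1)[OF fb that])
        have "integral\<^sup>L (M p) (\<lambda>\<omega>. (e p k \<omega>)^4) \<le> \<phi>" by (rule P.fb_int4(2)[OF fb that])
        also have "\<phi> \<le> C" unfolding C_def by simp
        finally show "integral\<^sup>L (M p) (\<lambda>\<omega>. (e p k \<omega>)^4) \<le> C * (integral\<^sup>L (M p) (\<lambda>\<omega>. (e p k \<omega>)\<^sup>2))\<^sup>2"
          using e2[OF that] by simp
      qed
      have "integral\<^sup>L (M p) (Q p) = (\<Sum>k<p. integral\<^sup>L (M p) (\<lambda>\<omega>. (e p k \<omega>)\<^sup>2))"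
        unfolding Qe by (rule P.E_sum) (rule P.fb_sq[OF fb _ emeas])
      also have "\<dots> = (\<Sum>k<p. 1)" using e2 by (intro sum.cong refl) simp
      finally have "integral\<^sup>L (M p) (Q p) = real p" by simp
      then show ?thesis using Qe kk by simp
    qed
    show "W2 M Q"
    proof (rule W2_core[OF prob C0, of Q e])
      show "\<forall>\<^sub>F p in sequentially. Q p = (\<lambda>\<omega>. \<Sum>k<p. (e p k \<omega>)\<^sup>2) \<and>
       (\<forall>k<p. e p k \<in> borel_measurable (M p) \<and> integrable (M p) (\<lambda>\<omega>. (e p k \<omega>)^4) \<and>
          integral\<^sup>L (M p) (\<lambda>\<omega>. (e p k \<omega>)^4) \<le> C * (integral\<^sup>L (M p) (\<lambda>\<omega>. (e p k \<omega>)\<^sup>2))\<^sup>2)"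
        using fbev by (rule eventually_mono) (rule conjunct1[OF step])
      show "(\<lambda>p. integral\<^sup>L (M p) (Q p)) \<in> O(\<lambda>p. real p)"
      proof (rule bigoI[where c=1])
        show "\<forall>\<^sub>F p in sequentially. norm (integral\<^sup>L (M p) (Q p)) \<le> 1 * norm (real p)"
          using fbev by (rule eventually_mono) (rule conjunct2[OF step])
      qed
    qed
  qed
  have part3: "(\<forall>p. sign_symmetric (M p) p (e p) \<or> prob_space.indep_vars (M p) (\<lambda>_. borel) (e p) {..<p}) \<longrightarrow>
      (\<exists>phi. \<forall>\<^sub>F p in sequentially. fourth_bounded (M p) p (e p) phi) \<longrightarrow> W1 M Q \<longrightarrow> W2 M Q"
  proof (intro impI)
    assume hyp: "\<forall>p. sign_symmetric (M p) p (e p) \<or> prob_space.indep_vars (M p) (\<lambda>_. borel) (e p) {..<p}"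
      and "\<exists>phi. \<forall>\<^sub>F p in sequentially. fourth_bounded (M p) p (e p) phi"
      and w1: "W1 M Q"
    then obtain \<phi> where fbev: "\<forall>\<^sub>F p in sequentially. fourth_bounded (M p) p (e p) \<phi>" by blast
    define \<phi>' where "\<phi>' = max \<phi> 0"
    define C where "C = 3 * \<phi>'"
    have phi': "0 \<le> \<phi>'" unfolding \<phi>'_def by simp
    have C0: "0 \<le> C" unfolding C_def using phi' by simp
    have step: "Q p = (\<lambda>\<omega>. \<Sum>k<p. (Y p k \<omega>)\<^sup>2) \<and>
       (\<forall>k<p. Y p k \<in> borel_measurable (M p) \<and> integrable (M p) (\<lambda>\<omega>. (Y p k \<omega>)^4) \<and>
          integral\<^sup>L (M p) (\<lambda>\<omega>. (Y p k \<omega>)^4) \<le> C * (integral\<^sup>L (M p) (\<lambda>\<omega>. (Y p k \<omega>)\<^sup>2))\<^sup>2)"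
      if fb0: "fourth_bounded (M p) p (e p) \<phi>" for p :: nat
    proof -
      interpret P: prob_space "M p" by (rule prob)
      have fb: "fourth_bounded (M p) p (e p) \<phi>'" using fb_mono[OF fb0] unfolding \<phi>'_def by simp
      have em: "\<And>i. i < p \<Longrightarrow> e p i \<in> borel_measurable (M p)" by (rule emeas)
      have odd: "P.expectation (\<lambda>\<omega>. e p x \<omega> * e p j \<omega> * e p k \<omega> * e p l \<omega>) = 0"
        if idx: "x < p" "j < p" "k < p" "l < p" "x \<noteq> j" "x \<noteq> k" "x \<noteq> l" for x j k l
      proof -
        have "sign_symmetric (M p) p (e p) \<or> prob_space.indep_vars (M p) (\<lambda>_. borel) (e p) {..<p}"
          using hyp by blast
        then show ?thesis
        proof
          assume sym: "sign_symmetric (M p) p (e p)"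
          show ?thesis by (rule P.odd_sym[OF em sym idx])
        next
          assume ind: "prob_space.indep_vars (M p) (\<lambda>_. borel) (e p) {..<p}"
          have ex: "integrable (M p) (e p x)" "P.expectation (e p x) = 0" using emean[OF idx(1)] by auto
          show ?thesis by (rule P.odd_indep[OF ind idx ex P.fb_int3[OF fb em idx(2,3,4)]])
        qed
      qed
      have ec: "\<And>i j. i < p \<Longrightarrow> j < p \<Longrightarrow> P.expectation (\<lambda>\<omega>. e p i \<omega> * e p j \<omega>) = (if i = j then 1 else 0)"
        by (rule ecov)
      have kk: "integrable (M p) (\<lambda>\<omega>. (Y p k \<omega>)^4) \<and>
          integral\<^sup>L (M p) (\<lambda>\<omega>. (Y p k \<omega>)^4) \<le> C * (integral\<^sup>L (M p) (\<lambda>\<omega>. (Y p k \<omega>)\<^sup>2))\<^sup>2" for k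
      proof -
        define w where "w = (\<lambda>m. \<Sum>i<p. U p k i * (\<Sum>m'<p. Delta p i m' * S p m' m))"
        have Yw: "Y p k = (\<lambda>\<omega>. \<Sum>m<p. w m * e p m \<omega>)"
        proof
          fix \<omega>
          have "Y p k \<omega> = (\<Sum>i<p. U p k i * (\<Sum>m<p. (\<Sum>m'<p. Delta p i m' * S p m' m) * (\<Sum>j<p. S p m j * eps p j \<omega>)))"
            unfolding Y_def
            by (rule sum.cong[OF refl]) (simp add: eps_from_e[OF S_def, symmetric])
          also have "\<dots> = (\<Sum>m<p. (\<Sum>i<p. U p k i * (\<Sum>m'<p. Delta p i m' * S p m' m)) * (\<Sum>j<p. S p m j * eps p j \<omega>))"
            by (rule swap3)
          also have "\<dots> = (\<Sum>m<p. w m * e p m \<omega>)" unfolding w_def e_app ..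
          finally show "Y p k \<omega> = (\<Sum>m<p. w m * e p m \<omega>)" .
        qed
        note fm = P.fourth_moment_bound[OF em fb phi' odd ec, of w]
        show ?thesis unfolding Yw C_def using fm by simp
      qed
      show ?thesis using QY Ym kk by blast
    qed
    show "W2 M Q"
    proof (rule W2_core[OF prob C0, of Q Y])
      show "\<forall>\<^sub>F p in sequentially. Q p = (\<lambda>\<omega>. \<Sum>k<p. (Y p k \<omega>)\<^sup>2) \<and>
       (\<forall>k<p. Y p k \<in> borel_measurable (M p) \<and> integrable (M p) (\<lambda>\<omega>. (Y p k \<omega>)^4) \<and>
          integral\<^sup>L (M p) (\<lambda>\<omega>. (Y p k \<omega>)^4) \<le> C * (integral\<^sup>L (M p) (\<lambda>\<omega>. (Y p k \<omega>)\<^sup>2))\<^sup>2)"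
        using fbev by (rule eventually_mono) (rule step)
      show "(\<lambda>p. integral\<^sup>L (M p) (Q p)) \<in> O(\<lambda>p. real p)" using w1 unfolding W1_def .
    qed
  qed
  show ?thesis
    unfolding Q_def[symmetric] e_eq using part1 part2 part3 by blast
qed


end
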